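(* Let $G,G'$ be simplicial groups acting on simplicial sets $X,X'$ respectively, and assume the orbit spaces $X/G$ and $X'/G'$ are discrete. Let $\varphi\colon G\to G'$ be a homomorphism of simplicial groups and $f\colon X\to X'$ a simplicial map equivariant along $\varphi$ (i.e. $f(gx)=\varphi(g)f(x)$). If $\varphi$ is a Kan fibration, then so is $f$.
   Context: The orbit space $X/G$ is the levelwise quotient of $X$ by the $G$-action; it is discrete if it is a constant simplicial set (all degeneracies from level $0$ are bijections). *)

theory Defs
  imports "HOL-Algebra.Group"
begin

text \<open>A simplicial set is given by its sets of n-simplices (cells n), face maps
  face n i : X_n \<rightarrow> X_(n-1) (for n \<ge> 1, i \<le> n) and degeneracy maps
  degen n i : X_n \<rightarrow> X_(n+1) (for i \<le> n), satisfying the simplicial identities.\<close>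

record 'a sset =
  cells :: "nat \<Rightarrow> 'a set"
  face  :: "nat \<Rightarrow> nat \<Rightarrow> 'a \<Rightarrow> 'a"
  degen :: "nat \<Rightarrow> nat \<Rightarrow> 'a \<Rightarrow> 'a"

definition sset :: "('a, 'm) sset_scheme \<Rightarrow> bool" where
  "sset X \<longleftrightarrow>
     (\<forall>n i x. 1 \<le> n \<and> i \<le> n \<and> x \<in> cells X n \<longrightarrow> face X n i x \<in> cells X (n - 1)) \<and>
     (\<forall>n i x. i \<le> n \<and> x \<in> cells X n \<longrightarrow> degen X n i x \<in> cells X (Suc n)) \<and>
     \<comment> \<open>d_i d_j = d_(j-1) d_i for i < j\<close>
     (\<forall>n i j x. 2 \<le> n \<and> i < j \<and> j \<le> n \<and> x \<in> cells X n \<longrightarrow>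
        face X (n - 1) i (face X n j x) = face X (n - 1) (j - 1) (face X n i x)) \<and>
     \<comment> \<open>d_i s_j = s_(j-1) d_i for i < j\<close>
     (\<forall>n i j x. 1 \<le> n \<and> i < j \<and> j \<le> n \<and> x \<in> cells X n \<longrightarrow>
        face X (Suc n) i (degen X n j x) = degen X (n - 1) (j - 1) (face X n i x)) \<and>
     \<comment> \<open>d_j s_j = id = d_(j+1) s_j\<close>
     (\<forall>n j x. j \<le> n \<and> x \<in> cells X n \<longrightarrow>
        face X (Suc n) j (degen X n j x) = x \<and> face X (Suc n) (Suc j) (degen X n j x) = x) \<and>
     \<comment> \<open>d_i s_j = s_j d_(i-1) for i > j + 1\<close>
     (\<forall>n i j x. j + 1 < i \<and> i \<le> Suc n \<and> x \<in> cells X n \<longrightarrow>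
        face X (Suc n) i (degen X n j x) = degen X (n - 1) j (face X n (i - 1) x)) \<and>
     \<comment> \<open>s_i s_j = s_(j+1) s_i for i \<le> j\<close>
     (\<forall>n i j x. i \<le> j \<and> j \<le> n \<and> x \<in> cells X n \<longrightarrow>
        degen X (Suc n) i (degen X n j x) = degen X (Suc n) (Suc j) (degen X n i x))"

definition smap :: "('a, 'm) sset_scheme \<Rightarrow> ('b, 'n) sset_scheme \<Rightarrow> (nat \<Rightarrow> 'a \<Rightarrow> 'b) \<Rightarrow> bool" where
  "smap X Y f \<longleftrightarrow>
     (\<forall>n x. x \<in> cells X n \<longrightarrow> f n x \<in> cells Y n) \<and>
     (\<forall>n i x. 1 \<le> n \<and> i \<le> n \<and> x \<in> cells X n \<longrightarrow> f (n - 1) (face X n i x) = face Y n i (f n x)) \<and>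
     (\<forall>n i x. i \<le> n \<and> x \<in> cells X n \<longrightarrow> f (Suc n) (degen X n i x) = degen Y n i (f n x))"

definition sgroup :: "'g sset \<Rightarrow> (nat \<Rightarrow> 'g monoid) \<Rightarrow> bool" where
  "sgroup G grp \<longleftrightarrow> sset G \<and>
     (\<forall>n. group (grp n) \<and> carrier (grp n) = cells G n) \<and>
     (\<forall>n i. 1 \<le> n \<and> i \<le> n \<longrightarrow> face G n i \<in> hom (grp n) (grp (n - 1))) \<and>
     (\<forall>n i. i \<le> n \<longrightarrow> degen G n i \<in> hom (grp n) (grp (Suc n)))"

definition sgroup_hom :: "'g sset \<Rightarrow> (nat \<Rightarrow> 'g monoid) \<Rightarrow> 'h sset \<Rightarrow> (nat \<Rightarrow> 'h monoid)
    \<Rightarrow> (nat \<Rightarrow> 'g \<Rightarrow> 'h) \<Rightarrow> bool" where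
  "sgroup_hom G grp G' grp' \<phi> \<longleftrightarrow> smap G G' \<phi> \<and> (\<forall>n. \<phi> n \<in> hom (grp n) (grp' n))"

definition saction :: "'g sset \<Rightarrow> (nat \<Rightarrow> 'g monoid) \<Rightarrow> 'a sset \<Rightarrow> (nat \<Rightarrow> 'g \<Rightarrow> 'a \<Rightarrow> 'a) \<Rightarrow> bool" where
  "saction G grp X act \<longleftrightarrow> sgroup G grp \<and> sset X \<and>
     (\<forall>n g x. g \<in> cells G n \<and> x \<in> cells X n \<longrightarrow> act n g x \<in> cells X n) \<and>
     (\<forall>n x. x \<in> cells X n \<longrightarrow> act n \<one>\<^bsub>grp n\<^esub> x = x) \<and>
     (\<forall>n g h x. g \<in> cells G n \<and> h \<in> cells G n \<and> x \<in> cells X n \<longrightarrow>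
        act n (g \<otimes>\<^bsub>grp n\<^esub> h) x = act n g (act n h x)) \<and>
     (\<forall>n i g x. 1 \<le> n \<and> i \<le> n \<and> g \<in> cells G n \<and> x \<in> cells X n \<longrightarrow>
        face X n i (act n g x) = act (n - 1) (face G n i g) (face X n i x)) \<and>
     (\<forall>n i g x. i \<le> n \<and> g \<in> cells G n \<and> x \<in> cells X n \<longrightarrow>
        degen X n i (act n g x) = act (Suc n) (degen G n i g) (degen X n i x))"

definition orbit :: "'g sset \<Rightarrow> (nat \<Rightarrow> 'g \<Rightarrow> 'a \<Rightarrow> 'a) \<Rightarrow> nat \<Rightarrow> 'a \<Rightarrow> 'a set" where
  "orbit G act n x = {act n g x | g. g \<in> cells G n}"

definition orbits :: "'g sset \<Rightarrow> 'a sset \<Rightarrow> (nat \<Rightarrow> 'g \<Rightarrow> 'a \<Rightarrow> 'a) \<Rightarrow> nat \<Rightarrow> 'a set set" where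
  "orbits G X act n = orbit G act n ` cells X n"

fun degen_iter :: "('a, 'm) sset_scheme \<Rightarrow> nat \<Rightarrow> 'a \<Rightarrow> 'a" where
  "degen_iter X 0 x = x"
| "degen_iter X (Suc n) x = degen X n 0 (degen_iter X n x)"

text \<open>The orbit space X/G is discrete (constant) if the degeneracy
  (X/G)_0 \<rightarrow> (X/G)_n induced on orbits is a bijection for every n.\<close>

definition orbit_space_discrete :: "'g sset \<Rightarrow> 'a sset \<Rightarrow> (nat \<Rightarrow> 'g \<Rightarrow> 'a \<Rightarrow> 'a) \<Rightarrow> bool" where
  "orbit_space_discrete G X act \<longleftrightarrow>
     (\<forall>n. bij_betw (\<lambda>Orb. orbit G act n (degen_iter X n (SOME x. x \<in> Orb)))
                   (orbits G X act 0) (orbits G X act n))"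

definition kan_fibration :: "'a sset \<Rightarrow> 'b sset \<Rightarrow> (nat \<Rightarrow> 'a \<Rightarrow> 'b) \<Rightarrow> bool" where
  "kan_fibration X Y f \<longleftrightarrow> smap X Y f \<and>
     (\<forall>n k xs y. 1 \<le> n \<and> k \<le> n \<and>
        (\<forall>i\<le>n. i \<noteq> k \<longrightarrow> xs i \<in> cells X (n - 1)) \<and>
        (\<forall>i j. i < j \<and> j \<le> n \<and> i \<noteq> k \<and> j \<noteq> k \<longrightarrow>
            face X (n - 1) i (xs j) = face X (n - 1) (j - 1) (xs i)) \<and>
        y \<in> cells Y n \<and>
        (\<forall>i\<le>n. i \<noteq> k \<longrightarrow> face Y n i y = f (n - 1) (xs i))
      \<longrightarrow> (\<exists>x \<in> cells X n. f n x = y \<and> (\<forall>i\<le>n. i \<noteq> k \<longrightarrow> face X n i x = xs i)))"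

end

theory Submission
  imports Defs
begin



lemma ss_face_cells:
  assumes "sset X" "i \<le> Suc p" "x \<in> cells X (Suc p)"
  shows "face X (Suc p) i x \<in> cells X p"
proof -
  have "\<forall>n i x. 1 \<le> n \<and> i \<le> n \<and> x \<in> cells X n \<longrightarrow> face X n i x \<in> cells X (n - 1)"
    using assms(1) unfolding sset_def by (elim conjE) assumption
  from this[rule_format, of "Suc p" i x] assms show ?thesis by simp
qed

lemma ss_degen_cells:
  assumes "sset X" "i \<le> n" "x \<in> cells X n"
  shows "degen X n i x \<in> cells X (Suc n)"
proof -
  have "\<forall>n i x. i \<le> n \<and> x \<in> cells X n \<longrightarrow> degen X n i x \<in> cells X (Suc n)"
    using assms(1) unfolding sset_def by (elim conjE) assumption
  with assms show ?thesis by blast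
qed

lemma ss_ff:
  assumes "sset X" "i < j" "j \<le> Suc (Suc p)" "x \<in> cells X (Suc (Suc p))"
  shows "face X (Suc p) i (face X (Suc (Suc p)) j x) = face X (Suc p) (j - 1) (face X (Suc (Suc p)) i x)"
proof -
  have "\<forall>n i j x. 2 \<le> n \<and> i < j \<and> j \<le> n \<and> x \<in> cells X n \<longrightarrow>
        face X (n - 1) i (face X n j x) = face X (n - 1) (j - 1) (face X n i x)"
    using assms(1) unfolding sset_def by (elim conjE) assumption
  from this[rule_format, of "Suc (Suc p)" i j x] assms show ?thesis by simp
qed

lemma ss_fd_lt:
  assumes "sset X" "i < j" "j \<le> Suc p" "x \<in> cells X (Suc p)"
  shows "face X (Suc (Suc p)) i (degen X (Suc p) j x) = degen X p (j - 1) (face X (Suc p) i x)"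
proof -
  have "\<forall>n i j x. 1 \<le> n \<and> i < j \<and> j \<le> n \<and> x \<in> cells X n \<longrightarrow>
        face X (Suc n) i (degen X n j x) = degen X (n - 1) (j - 1) (face X n i x)"
    using assms(1) unfolding sset_def by (elim conjE) assumption
  from this[rule_format, of "Suc p" i j x] assms show ?thesis by simp
qed

lemma ss_fd_eq:
  assumes "sset X" "j \<le> n" "x \<in> cells X n"
  shows "face X (Suc n) j (degen X n j x) = x" "face X (Suc n) (Suc j) (degen X n j x) = x"
proof -
  have "\<forall>n j x. j \<le> n \<and> x \<in> cells X n \<longrightarrow>
        face X (Suc n) j (degen X n j x) = x \<and> face X (Suc n) (Suc j) (degen X n j x) = x"
    using assms(1) unfolding sset_def by (elim conjE) assumption
  with assms show "face X (Suc n) j (degen X n j x) = x" "face X (Suc n) (Suc j) (degen X n j x) = x" by blast+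
qed

lemma ss_fd_gt:
  assumes "sset X" "j + 1 < i" "i \<le> Suc (Suc p)" "x \<in> cells X (Suc p)"
  shows "face X (Suc (Suc p)) i (degen X (Suc p) j x) = degen X p j (face X (Suc p) (i - 1) x)"
proof -
  have "\<forall>n i j x. j + 1 < i \<and> i \<le> Suc n \<and> x \<in> cells X n \<longrightarrow>
        face X (Suc n) i (degen X n j x) = degen X (n - 1) j (face X n (i - 1) x)"
    using assms(1) unfolding sset_def by (elim conjE) assumption
  from this[rule_format, of j i "Suc p" x] assms show ?thesis by simp
qed

lemma ss_dd:
  assumes "sset X" "i \<le> j" "j \<le> n" "x \<in> cells X n"
  shows "degen X (Suc n) i (degen X n j x) = degen X (Suc n) (Suc j) (degen X n i x)"
proof -
  have "\<forall>n i j x. i \<le> j \<and> j \<le> n \<and> x \<in> cells X n \<longrightarrow>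
        degen X (Suc n) i (degen X n j x) = degen X (Suc n) (Suc j) (degen X n i x)"
    using assms(1) unfolding sset_def by (elim conjE) assumption
  with assms show ?thesis by blast
qed

section \<open>simplicial groups\<close>

lemma sg_sset: "sgroup G grp \<Longrightarrow> sset G"
  unfolding sgroup_def by blast
lemma sg_group: "sgroup G grp \<Longrightarrow> group (grp n)"
  unfolding sgroup_def by blast
lemma sg_carrier: "sgroup G grp \<Longrightarrow> carrier (grp n) = cells G n"
  unfolding sgroup_def by blast
lemma sg_face_hom: "sgroup G grp \<Longrightarrow> i \<le> Suc p \<Longrightarrow> face G (Suc p) i \<in> hom (grp (Suc p)) (grp p)"
proof -
  assume a: "sgroup G grp" "i \<le> Suc p"
  have "\<forall>n i. 1 \<le> n \<and> i \<le> n \<longrightarrow> face G n i \<in> hom (grp n) (grp (n - 1))"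
    using a(1) unfolding sgroup_def by (elim conjE) assumption
  from this[rule_format, of "Suc p" i] a(2) show ?thesis by simp
qed
lemma sg_degen_hom: "sgroup G grp \<Longrightarrow> i \<le> n \<Longrightarrow> degen G n i \<in> hom (grp n) (grp (Suc n))"
  unfolding sgroup_def by blast


lemma sg_face_ghom: "sgroup G grp \<Longrightarrow> i \<le> Suc p \<Longrightarrow> group_hom (grp (Suc p)) (grp p) (face G (Suc p) i)"
  by (rule group_hom.intro[OF sg_group sg_group], assumption, assumption, rule group_hom_axioms.intro, rule sg_face_hom)
lemma sg_degen_ghom: "sgroup G grp \<Longrightarrow> i \<le> n \<Longrightarrow> group_hom (grp n) (grp (Suc n)) (degen G n i)"
  by (rule group_hom.intro[OF sg_group sg_group], assumption, assumption, rule group_hom_axioms.intro, rule sg_degen_hom)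

lemma sg_face_mult: assumes "sgroup G grp" "i \<le> Suc p" "x \<in> cells G (Suc p)" "y \<in> cells G (Suc p)"
  shows "face G (Suc p) i (x \<otimes>\<^bsub>grp (Suc p)\<^esub> y) = face G (Suc p) i x \<otimes>\<^bsub>grp p\<^esub> face G (Suc p) i y"
  using group_hom.hom_mult[OF sg_face_ghom[OF assms(1,2)], of x y] sg_carrier[OF assms(1)] assms(3,4) by simp
lemma sg_face_inv: assumes "sgroup G grp" "i \<le> Suc p" "x \<in> cells G (Suc p)"
  shows "face G (Suc p) i (inv\<^bsub>grp (Suc p)\<^esub> x) = inv\<^bsub>grp p\<^esub> face G (Suc p) i x"
  using group_hom.hom_inv[OF sg_face_ghom[OF assms(1,2)], of x] sg_carrier[OF assms(1)] assms(3) by simp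
lemma sg_face_one: assumes "sgroup G grp" "i \<le> Suc p"
  shows "face G (Suc p) i \<one>\<^bsub>grp (Suc p)\<^esub> = \<one>\<^bsub>grp p\<^esub>"
  using group_hom.hom_one[OF sg_face_ghom[OF assms(1,2)]] by simp
lemma sg_degen_mult: assumes "sgroup G grp" "i \<le> n" "x \<in> cells G n" "y \<in> cells G n"
  shows "degen G n i (x \<otimes>\<^bsub>grp n\<^esub> y) = degen G n i x \<otimes>\<^bsub>grp (Suc n)\<^esub> degen G n i y"
  using group_hom.hom_mult[OF sg_degen_ghom[OF assms(1,2)], of x y] sg_carrier[OF assms(1)] assms(3,4) by simp
lemma sg_degen_inv: assumes "sgroup G grp" "i \<le> n" "x \<in> cells G n"
  shows "degen G n i (inv\<^bsub>grp n\<^esub> x) = inv\<^bsub>grp (Suc n)\<^esub> degen G n i x"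
  using group_hom.hom_inv[OF sg_degen_ghom[OF assms(1,2)], of x] sg_carrier[OF assms(1)] assms(3) by simp
lemma sg_degen_one: assumes "sgroup G grp" "i \<le> n"
  shows "degen G n i \<one>\<^bsub>grp n\<^esub> = \<one>\<^bsub>grp (Suc n)\<^esub>"
  using group_hom.hom_one[OF sg_degen_ghom[OF assms(1,2)]] by simp




definition ssub :: "'g sset \<Rightarrow> (nat \<Rightarrow> 'g monoid) \<Rightarrow> (nat \<Rightarrow> 'g set) \<Rightarrow> bool" where
 "ssub G grp K \<longleftrightarrow> (\<forall>n. subgroup (K n) (grp n)) \<and>
   (\<forall>p i x. i \<le> Suc p \<and> x \<in> K (Suc p) \<longrightarrow> face G (Suc p) i x \<in> K p) \<and>
   (\<forall>n i x. i \<le> n \<and> x \<in> K n \<longrightarrow> degen G n i x \<in> K (Suc n))"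

lemma ssub_subgroup: "ssub G grp K \<Longrightarrow> subgroup (K n) (grp n)"
  unfolding ssub_def by blast
lemma ssub_cells: "sgroup G grp \<Longrightarrow> ssub G grp K \<Longrightarrow> x \<in> K n \<Longrightarrow> x \<in> cells G n"
  using subgroup.subset[OF ssub_subgroup[of G grp K n]] sg_carrier[of G grp n] by blast
lemma ssub_mult: "ssub G grp K \<Longrightarrow> x \<in> K n \<Longrightarrow> y \<in> K n \<Longrightarrow> x \<otimes>\<^bsub>grp n\<^esub> y \<in> K n"
  by (rule subgroup.m_closed[OF ssub_subgroup])
lemma ssub_inv: "sgroup G grp \<Longrightarrow> ssub G grp K \<Longrightarrow> x \<in> K n \<Longrightarrow> inv\<^bsub>grp n\<^esub> x \<in> K n"
  by (rule group.subgroupE(3)[OF sg_group ssub_subgroup])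
lemma ssub_one: "ssub G grp K \<Longrightarrow> \<one>\<^bsub>grp n\<^esub> \<in> K n"
  by (rule subgroup.one_closed[OF ssub_subgroup])
lemma ssub_face: "ssub G grp K \<Longrightarrow> i \<le> Suc p \<Longrightarrow> x \<in> K (Suc p) \<Longrightarrow> face G (Suc p) i x \<in> K p"
  unfolding ssub_def by blast
lemma ssub_degen: "ssub G grp K \<Longrightarrow> i \<le> n \<Longrightarrow> x \<in> K n \<Longrightarrow> degen G n i x \<in> K (Suc n)"
  unfolding ssub_def by blast

context group begin
lemma cancel_l1: "x \<in> carrier G \<Longrightarrow> y \<in> carrier G \<Longrightarrow> x \<otimes> (inv x \<otimes> y) = y"
  by (simp add: m_assoc[symmetric])
lemma cancel_l2: "x \<in> carrier G \<Longrightarrow> y \<in> carrier G \<Longrightarrow> inv x \<otimes> (x \<otimes> y) = y"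
  by (simp add: m_assoc[symmetric])
lemma alg1:
  assumes "subgroup S G" "c \<in> carrier G" "h2 \<in> S" "h3 \<in> S"
  shows "inv ((c \<otimes> h2) \<otimes> h3) \<otimes> c \<in> S"
proof -
  have h: "h2 \<in> carrier G" "h3 \<in> carrier G" using assms subgroup.mem_carrier by force+
  have "inv ((c \<otimes> h2) \<otimes> h3) \<otimes> c = inv h3 \<otimes> inv h2"
    using h assms(2) by (simp add: inv_mult_group m_assoc)
  moreover have "inv h3 \<otimes> inv h2 \<in> S"
    using assms by (simp add: subgroup.m_closed subgroup.m_inv_closed)
  ultimately show ?thesis by simp
qed

lemma alg2:
  assumes "subgroup S G" "c \<in> carrier G" "h1 \<in> S" "h2 \<in> S"
  shows "inv (c \<otimes> h1) \<otimes> (c \<otimes> h2) \<in> S"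
proof -
  have h: "h1 \<in> carrier G" "h2 \<in> carrier G" using assms subgroup.mem_carrier by force+
  have cc: "inv c \<otimes> (c \<otimes> h2) = h2" using h assms(2) by (simp add: m_assoc[symmetric])
  have "inv (c \<otimes> h1) \<otimes> (c \<otimes> h2) = inv h1 \<otimes> h2"
    using h assms(2) cc by (simp add: inv_mult_group m_assoc)
  moreover have "inv h1 \<otimes> h2 \<in> S"
    using assms by (simp add: subgroup.m_closed subgroup.m_inv_closed)
  ultimately show ?thesis by simp
qed
end

locale moore =
  fixes G :: "'g sset" and grp :: "nat \<Rightarrow> 'g monoid" and K Hs :: "nat \<Rightarrow> 'g set"
    and a :: "nat \<Rightarrow> 'g" and m k :: nat
  assumes sg: "sgroup G grp" and sK: "ssub G grp K" and sH: "ssub G grp Hs"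
    and HK: "\<And>n. Hs n \<subseteq> K n"
    and kle: "k \<le> Suc m"
    and aK: "\<And>i. i \<le> Suc m \<Longrightarrow> i \<noteq> k \<Longrightarrow> a i \<in> K m"
    and compat: "\<And>i j. i < j \<Longrightarrow> j \<le> Suc m \<Longrightarrow> i \<noteq> k \<Longrightarrow> j \<noteq> k \<Longrightarrow>
        \<exists>h\<in>Hs (m - 1). face G m (j - 1) (a i) = face G m i (a j) \<otimes>\<^bsub>grp (m - 1)\<^esub> h"
begin

definition R where "R i w \<longleftrightarrow> (\<exists>h\<in>Hs m. face G (Suc m) i w = a i \<otimes>\<^bsub>grp m\<^esub> h)"

lemma Kc: "x \<in> K n \<Longrightarrow> x \<in> cells G n" using ssub_cells[OF sg sK] .
lemma Hc: "x \<in> Hs n \<Longrightarrow> x \<in> cells G n" using ssub_cells[OF sg sH] .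
lemma grp: "group (grp n)" using sg_group[OF sg] .
lemma carr: "carrier (grp n) = cells G n" using sg_carrier[OF sg] .
lemma sset: "sset G" using sg_sset[OF sg] .

lemma lowU:
  assumes mp: "m = Suc p" and w: "w \<in> K (Suc m)" and ir: "i < r" "r \<le> Suc m" "i \<noteq> k" "r \<noteq> k"
    and Rw: "R i w"
  shows "face G (Suc p) i (inv\<^bsub>grp m\<^esub> (face G (Suc m) r w) \<otimes>\<^bsub>grp m\<^esub> a r) \<in> Hs p"
proof -
  from Rw[unfolded R_def] mp obtain h where h: "h \<in> Hs (Suc p)" "face G (Suc (Suc p)) i w = a i \<otimes>\<^bsub>grp (Suc p)\<^esub> h"
    by auto
  from compat[OF ir] obtain h2 where h2: "h2 \<in> Hs p"
    "face G (Suc p) (r - 1) (a i) = face G (Suc p) i (a r) \<otimes>\<^bsub>grp p\<^esub> h2"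
    using mp by auto
  have ai: "a i \<in> cells G (Suc p)" using aK[of i] ir Kc mp by auto
  have ar: "a r \<in> cells G (Suc p)" using aK[of r] ir Kc mp by auto
  have wc: "w \<in> cells G (Suc (Suc p))" using w Kc mp by auto
  have hc: "h \<in> cells G (Suc p)" using h Hc by auto
  have "face G (Suc p) i (face G (Suc (Suc p)) r w) = face G (Suc p) (r - 1) (face G (Suc (Suc p)) i w)"
    using ss_ff[OF sset ir(1) _ wc] ir mp by simp
  also have "\<dots> = face G (Suc p) (r - 1) (a i) \<otimes>\<^bsub>grp p\<^esub> face G (Suc p) (r - 1) h"
    using h(2) sg_face_mult[OF sg _ ai hc, of "r - 1"] ir mp by simp
  also have "\<dots> = (face G (Suc p) i (a r) \<otimes>\<^bsub>grp p\<^esub> h2) \<otimes>\<^bsub>grp p\<^esub> face G (Suc p) (r - 1) h"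
    using h2 by simp
  finally have eq1: "face G (Suc p) i (face G (Suc (Suc p)) r w) =
     (face G (Suc p) i (a r) \<otimes>\<^bsub>grp p\<^esub> h2) \<otimes>\<^bsub>grp p\<^esub> face G (Suc p) (r - 1) h" .
  have frw: "face G (Suc (Suc p)) r w \<in> cells G (Suc p)"
    using ss_face_cells[OF sset _ wc] ir mp by simp
  have ic: "inv\<^bsub>grp (Suc p)\<^esub> (face G (Suc (Suc p)) r w) \<in> cells G (Suc p)"
    using group.inv_closed[OF grp, of "face G (Suc (Suc p)) r w" "Suc p"] frw carr by simp
  have "face G (Suc p) i (inv\<^bsub>grp m\<^esub> (face G (Suc m) r w) \<otimes>\<^bsub>grp m\<^esub> a r)
     = inv\<^bsub>grp p\<^esub> (face G (Suc p) i (face G (Suc (Suc p)) r w)) \<otimes>\<^bsub>grp p\<^esub> face G (Suc p) i (a r)"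
    using sg_face_mult[OF sg _ ic ar, of i] sg_face_inv[OF sg _ frw, of i] ir mp by simp
  also have "\<dots> \<in> Hs p" unfolding eq1
    apply (rule group.alg1[OF grp ssub_subgroup[OF sH]])
    using ss_face_cells[OF sset _ ar, of i] ir mp carr apply simp
    using h2 apply simp
    using ssub_face[OF sH _ h(1), of "r - 1"] ir mp by simp
  finally show ?thesis .
qed

lemma highU:
  assumes mp: "m = Suc p" and w: "w \<in> K (Suc m)" and ri: "r < i" "i \<le> Suc m" "i \<noteq> k" "r \<noteq> k"
    and Rw: "R i w"
  shows "face G (Suc p) (i - 1) (inv\<^bsub>grp m\<^esub> (face G (Suc m) r w) \<otimes>\<^bsub>grp m\<^esub> a r) \<in> Hs p"
proof -
  from Rw[unfolded R_def] mp obtain h where h: "h \<in> Hs (Suc p)" "face G (Suc (Suc p)) i w = a i \<otimes>\<^bsub>grp (Suc p)\<^esub> h"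
    by auto
  from compat[OF ri(1,2,4,3)] obtain h2 where h2: "h2 \<in> Hs p"
    "face G (Suc p) (i - 1) (a r) = face G (Suc p) r (a i) \<otimes>\<^bsub>grp p\<^esub> h2"
    using mp by auto
  have ai: "a i \<in> cells G (Suc p)" using aK[of i] ri Kc mp by auto
  have ar: "a r \<in> cells G (Suc p)" using aK[of r] ri Kc mp by auto
  have wc: "w \<in> cells G (Suc (Suc p))" using w Kc mp by auto
  have hc: "h \<in> cells G (Suc p)" using h Hc by auto
  have "face G (Suc p) (i - 1) (face G (Suc (Suc p)) r w) = face G (Suc p) r (face G (Suc (Suc p)) i w)"
    using ss_ff[OF sset ri(1) _ wc] ri mp by simp
  also have "\<dots> = face G (Suc p) r (a i) \<otimes>\<^bsub>grp p\<^esub> face G (Suc p) r h"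
    using h(2) sg_face_mult[OF sg _ ai hc, of r] ri mp by simp
  finally have eq1: "face G (Suc p) (i - 1) (face G (Suc (Suc p)) r w) =
     face G (Suc p) r (a i) \<otimes>\<^bsub>grp p\<^esub> face G (Suc p) r h" .
  have frw: "face G (Suc (Suc p)) r w \<in> cells G (Suc p)"
    using ss_face_cells[OF sset _ wc] ri mp by simp
  have ic: "inv\<^bsub>grp (Suc p)\<^esub> (face G (Suc (Suc p)) r w) \<in> cells G (Suc p)"
    using group.inv_closed[OF grp, of "face G (Suc (Suc p)) r w" "Suc p"] frw carr by simp
  have "face G (Suc p) (i - 1) (inv\<^bsub>grp m\<^esub> (face G (Suc m) r w) \<otimes>\<^bsub>grp m\<^esub> a r)
     = inv\<^bsub>grp p\<^esub> (face G (Suc p) (i - 1) (face G (Suc (Suc p)) r w)) \<otimes>\<^bsub>grp p\<^esub> face G (Suc p) (i - 1) (a r)"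
    using sg_face_mult[OF sg _ ic ar, of "i - 1"] sg_face_inv[OF sg _ frw, of "i - 1"] ri mp by simp
  also have "\<dots> \<in> Hs p" unfolding eq1 h2(2)
    apply (rule group.alg2[OF grp ssub_subgroup[OF sH]])
    using ss_face_cells[OF sset _ ai, of r] ri mp carr apply simp
    using ssub_face[OF sH _ h(1), of r] ri mp apply simp
    using h2 by simp
  finally show ?thesis .
qed

end




context moore begin

lemma uK: assumes "w \<in> K (Suc m)" "r \<le> Suc m" "r \<noteq> k"
  shows "inv\<^bsub>grp m\<^esub> (face G (Suc m) r w) \<otimes>\<^bsub>grp m\<^esub> a r \<in> K m"
  by (rule ssub_mult[OF sK ssub_inv[OF sg sK ssub_face[OF sK assms(2,1)]] aK[OF assms(2,3)]])

lemma stepA: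
  assumes w: "w \<in> K (Suc m)" and rk: "r < k" and R: "\<forall>i<r. R i w"
  shows "\<exists>w'\<in>K (Suc m). \<forall>i<Suc r. R i w'"
proof -
  have rm: "r \<le> m" using rk kle by simp
  define u where "u = inv\<^bsub>grp m\<^esub> (face G (Suc m) r w) \<otimes>\<^bsub>grp m\<^esub> a r"
  have u: "u \<in> K m" unfolding u_def using uK[OF w] rm rk by simp
  define w' where "w' = w \<otimes>\<^bsub>grp (Suc m)\<^esub> degen G m r u"
  have du: "degen G m r u \<in> K (Suc m)" using ssub_degen[OF sK rm u] .
  have w': "w' \<in> K (Suc m)" unfolding w'_def using ssub_mult[OF sK w du] .
  have wc: "w \<in> cells G (Suc m)" using Kc[OF w] .
  have uc: "u \<in> cells G m" using Kc[OF u] .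
  have duc: "degen G m r u \<in> cells G (Suc m)" using Kc[OF du] .
  have face_w': "face G (Suc m) i w' = face G (Suc m) i w \<otimes>\<^bsub>grp m\<^esub> face G (Suc m) i (degen G m r u)"
    if "i \<le> Suc m" for i
    unfolding w'_def using sg_face_mult[OF sg that wc duc] .
  have "R i w'" if i: "i < Suc r" for i
  proof (cases "i = r")
    case True
    have frw: "face G (Suc m) r w \<in> cells G m" using ss_face_cells[OF sset _ wc] rm by simp
    have ar: "a r \<in> cells G m" using Kc[OF aK] rm rk by simp
    have "face G (Suc m) r w' = face G (Suc m) r w \<otimes>\<^bsub>grp m\<^esub> u"
      using face_w'[of r] ss_fd_eq(1)[OF sset rm uc] rm by simp
    also have "\<dots> = a r" unfolding u_def
      using group.cancel_l1[OF grp[of m]] frw ar carr[of m] by simp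
    finally show ?thesis unfolding R_def True
      using ssub_one[OF sH, of m] ar carr[of m] monoid.r_one[OF group.is_monoid[OF grp[of m]]] by force
  next
    case False
    then have ir: "i < r" using i by simp
    then obtain p where mp: "m = Suc p" using rm by (cases m) auto
    from R ir obtain h where h: "h \<in> Hs m" "face G (Suc m) i w = a i \<otimes>\<^bsub>grp m\<^esub> h"
      unfolding R_def by blast
    have lu: "face G (Suc p) i u \<in> Hs p"
      unfolding u_def using lowU[OF mp w ir _ _ _ R[rule_format, OF ir]] rk rm ir by simp
    have dl: "degen G p (r - 1) (face G (Suc p) i u) \<in> Hs m"
      using ssub_degen[OF sH _ lu, of "r - 1"] rm mp by simp
    have "face G (Suc m) i (degen G m r u) = degen G p (r - 1) (face G (Suc p) i u)"
      using ss_fd_lt[OF sset ir _ , of p u] rm uc mp by simp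
    then have "face G (Suc m) i w' = (a i \<otimes>\<^bsub>grp m\<^esub> h) \<otimes>\<^bsub>grp m\<^esub> degen G p (r - 1) (face G (Suc p) i u)"
      using face_w'[of i] h ir rm by simp
    also have "\<dots> = a i \<otimes>\<^bsub>grp m\<^esub> (h \<otimes>\<^bsub>grp m\<^esub> degen G p (r - 1) (face G (Suc p) i u))"
      using monoid.m_assoc[OF group.is_monoid[OF grp[of m]]] Kc[OF aK, of i] ir rm rk
        Hc[OF h(1)] Hc[OF dl] carr[of m] by simp
    finally show ?thesis unfolding R_def using ssub_mult[OF sH h(1) dl] by blast
  qed
  with w' show ?thesis by blast
qed

lemma stepB:
  assumes w: "w \<in> K (Suc m)" and rk: "k < r" "r \<le> Suc m"
    and Rlo: "\<forall>i<k. R i w" and Rhi: "\<forall>i. r < i \<and> i \<le> Suc m \<longrightarrow> R i w"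
  shows "\<exists>w'\<in>K (Suc m). (\<forall>i<k. R i w') \<and> (\<forall>i. r \<le> i \<and> i \<le> Suc m \<longrightarrow> R i w')"
proof -
  obtain q where rq: "r = Suc q" using rk by (cases r) auto
  have qm: "q \<le> m" using rk rq by simp
  define u where "u = inv\<^bsub>grp m\<^esub> (face G (Suc m) r w) \<otimes>\<^bsub>grp m\<^esub> a r"
  have u: "u \<in> K m" unfolding u_def using uK[OF w] rk by simp
  define w' where "w' = w \<otimes>\<^bsub>grp (Suc m)\<^esub> degen G m q u"
  have du: "degen G m q u \<in> K (Suc m)" using ssub_degen[OF sK qm u] .
  have w': "w' \<in> K (Suc m)" unfolding w'_def using ssub_mult[OF sK w du] .
  have wc: "w \<in> cells G (Suc m)" using Kc[OF w] .
  have uc: "u \<in> cells G m" using Kc[OF u] .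
  have duc: "degen G m q u \<in> cells G (Suc m)" using Kc[OF du] .
  have face_w': "face G (Suc m) i w' = face G (Suc m) i w \<otimes>\<^bsub>grp m\<^esub> face G (Suc m) i (degen G m q u)"
    if "i \<le> Suc m" for i
    unfolding w'_def using sg_face_mult[OF sg that wc duc] .
  have assoc: "face G (Suc m) i w' = a i \<otimes>\<^bsub>grp m\<^esub> (h \<otimes>\<^bsub>grp m\<^esub> d)"
    if "i \<le> Suc m" "i \<noteq> k" "h \<in> Hs m" "face G (Suc m) i w = a i \<otimes>\<^bsub>grp m\<^esub> h"
       "face G (Suc m) i (degen G m q u) = d" "d \<in> Hs m" for i h d
  proof -
    have "face G (Suc m) i w' = (a i \<otimes>\<^bsub>grp m\<^esub> h) \<otimes>\<^bsub>grp m\<^esub> d"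
      using face_w'[OF that(1)] that by simp
    also have "\<dots> = a i \<otimes>\<^bsub>grp m\<^esub> (h \<otimes>\<^bsub>grp m\<^esub> d)"
      using monoid.m_assoc[OF group.is_monoid[OF grp[of m]]] Kc[OF aK[OF that(1,2)]]
        Hc[OF that(3)] Hc[OF that(6)] carr[of m] by simp
    finally show ?thesis .
  qed
  have "R i w'" if i: "i < k \<or> (r \<le> i \<and> i \<le> Suc m)" for i
  proof -
    consider "i = r" | "i < k" | "r < i" "i \<le> Suc m" using i by linarith
    then show ?thesis
    proof cases
      case 1
      have frw: "face G (Suc m) r w \<in> cells G m" using ss_face_cells[OF sset _ wc] rk by simp
      have ar: "a r \<in> cells G m" using Kc[OF aK] rk by simp
      have "face G (Suc m) r w' = face G (Suc m) r w \<otimes>\<^bsub>grp m\<^esub> u"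
        using face_w'[of r] ss_fd_eq(2)[OF sset qm uc] rk rq by simp
      also have "\<dots> = a r" unfolding u_def
        using group.cancel_l1[OF grp[of m]] frw ar carr[of m] by simp
      finally show ?thesis unfolding R_def 1
        using ssub_one[OF sH, of m] ar carr[of m] monoid.r_one[OF group.is_monoid[OF grp[of m]]] by force
    next
      case 2
      have iq: "i < q" using 2 rk rq by simp
      then obtain p where mp: "m = Suc p" using qm by (cases m) auto
      from Rlo 2 obtain h where h: "h \<in> Hs m" "face G (Suc m) i w = a i \<otimes>\<^bsub>grp m\<^esub> h"
        unfolding R_def by blast
      have lu: "face G (Suc p) i u \<in> Hs p"
        unfolding u_def using lowU[OF mp w _ _ _ _ Rlo[rule_format, OF 2], of r] rk 2 by simp
      have dl: "degen G p (q - 1) (face G (Suc p) i u) \<in> Hs m"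
        using ssub_degen[OF sH _ lu, of "q - 1"] qm mp by simp
      have "face G (Suc m) i (degen G m q u) = degen G p (q - 1) (face G (Suc p) i u)"
        using ss_fd_lt[OF sset iq _ , of p u] qm uc mp by simp
      then have "face G (Suc m) i w' = a i \<otimes>\<^bsub>grp m\<^esub> (h \<otimes>\<^bsub>grp m\<^esub> degen G p (q - 1) (face G (Suc p) i u))"
        using assoc[OF _ _ h(1) h(2) _ dl] 2 kle by simp
      then show ?thesis unfolding R_def using ssub_mult[OF sH h(1) dl] by blast
    next
      case 3
      have iq: "q + 1 < i" using 3 rq by simp
      then obtain p where mp: "m = Suc p" using 3 by (cases m) auto
      have ik: "i \<noteq> k" using 3 rk by simp
      from Rhi 3 obtain h where h: "h \<in> Hs m" "face G (Suc m) i w = a i \<otimes>\<^bsub>grp m\<^esub> h"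
        unfolding R_def by blast
      have lu: "face G (Suc p) (i - 1) u \<in> Hs p"
        unfolding u_def using highU[OF mp w 3 ik _ Rhi[rule_format, OF conjI[OF 3]]] rk by simp
      have dl: "degen G p q (face G (Suc p) (i - 1) u) \<in> Hs m"
        using ssub_degen[OF sH _ lu, of q] iq 3 mp by simp
      have "face G (Suc m) i (degen G m q u) = degen G p q (face G (Suc p) (i - 1) u)"
        using ss_fd_gt[OF sset iq _ , of p u] 3 uc mp by simp
      then have "face G (Suc m) i w' = a i \<otimes>\<^bsub>grp m\<^esub> (h \<otimes>\<^bsub>grp m\<^esub> degen G p q (face G (Suc p) (i - 1) u))"
        using assoc[OF _ ik h(1) h(2) _ dl] 3 by simp
      then show ?thesis unfolding R_def using ssub_mult[OF sH h(1) dl] by blast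
    qed
  qed
  with w' show ?thesis by blast
qed

lemma partA: "r \<le> k \<Longrightarrow> \<exists>w\<in>K (Suc m). \<forall>i<r. R i w"
proof (induction r)
  case 0
  then show ?case using ssub_one[OF sK] by blast
next
  case (Suc r)
  then obtain w where "w \<in> K (Suc m)" "\<forall>i<r. R i w" by auto
  then show ?case using stepA Suc.prems by simp
qed

lemma partB: "d \<le> Suc m - k \<Longrightarrow> \<exists>w\<in>K (Suc m). (\<forall>i<k. R i w) \<and> (\<forall>i. Suc m - d < i \<and> i \<le> Suc m \<longrightarrow> R i w)"
proof (induction d)
  case 0
  then show ?case using partA[of k] by auto
next
  case (Suc d)
  then obtain w where w: "w \<in> K (Suc m)" "\<forall>i<k. R i w" "\<forall>i. Suc m - d < i \<and> i \<le> Suc m \<longrightarrow> R i w"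
    by auto
  have "k < Suc m - d" "Suc m - d \<le> Suc m" using Suc.prems by auto
  from stepB[OF w(1) this w(2,3)] obtain w' where "w' \<in> K (Suc m)" "\<forall>i<k. R i w'"
    "\<forall>i. Suc m - d \<le> i \<and> i \<le> Suc m \<longrightarrow> R i w'" by blast
  then show ?case by (intro bexI[of _ w']) auto
qed

lemma fill: "\<exists>w\<in>K (Suc m). \<forall>i\<le>Suc m. i \<noteq> k \<longrightarrow> (\<exists>h\<in>Hs m. face G (Suc m) i w = a i \<otimes>\<^bsub>grp m\<^esub> h)"
proof -
  obtain w where w: "w \<in> K (Suc m)" "\<forall>i<k. R i w" "\<forall>i. Suc m - (Suc m - k) < i \<and> i \<le> Suc m \<longrightarrow> R i w"
    using partB[of "Suc m - k"] by auto
  have "R i w" if "i \<le> Suc m" "i \<noteq> k" for i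
    using w(2,3) that kle by (cases "i < k") auto
  with w(1) show ?thesis unfolding R_def by blast
qed

end

lemma moore_fill:
  assumes "sgroup G grp" "ssub G grp K" "ssub G grp Hs" "\<And>n. Hs n \<subseteq> K n" "k \<le> Suc m"
    "\<And>i. i \<le> Suc m \<Longrightarrow> i \<noteq> k \<Longrightarrow> a i \<in> K m"
    "\<And>i j. i < j \<Longrightarrow> j \<le> Suc m \<Longrightarrow> i \<noteq> k \<Longrightarrow> j \<noteq> k \<Longrightarrow>
        \<exists>h\<in>Hs (m - 1). face G m (j - 1) (a i) = face G m i (a j) \<otimes>\<^bsub>grp (m - 1)\<^esub> h"
  shows "\<exists>w\<in>K (Suc m). \<forall>i\<le>Suc m. i \<noteq> k \<longrightarrow> (\<exists>h\<in>Hs m. face G (Suc m) i w = a i \<otimes>\<^bsub>grp m\<^esub> h)"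
proof -
  interpret moore G grp K Hs a m k using assms by (unfold_locales) auto
  show ?thesis using fill .
qed




section \<open>actions\<close>

lemma sa_sg: "saction G grp X act \<Longrightarrow> sgroup G grp" unfolding saction_def by (elim conjE) assumption
lemma sa_sset: "saction G grp X act \<Longrightarrow> sset X" unfolding saction_def by (elim conjE) assumption
lemma sa_cells: assumes "saction G grp X act" "g \<in> cells G n" "x \<in> cells X n" shows "act n g x \<in> cells X n"
proof -
  have "\<forall>n g x. g \<in> cells G n \<and> x \<in> cells X n \<longrightarrow> act n g x \<in> cells X n"
    using assms(1) unfolding saction_def by (elim conjE) assumption
  with assms show ?thesis by blast
qed
lemma sa_one: assumes "saction G grp X act" "x \<in> cells X n" shows "act n \<one>\<^bsub>grp n\<^esub> x = x"
proof -
  have "\<forall>n x. x \<in> cells X n \<longrightarrow> act n \<one>\<^bsub>grp n\<^esub> x = x"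
    using assms(1) unfolding saction_def by (elim conjE) assumption
  with assms show ?thesis by blast
qed
lemma sa_mult: assumes "saction G grp X act" "g \<in> cells G n" "h \<in> cells G n" "x \<in> cells X n"
  shows "act n (g \<otimes>\<^bsub>grp n\<^esub> h) x = act n g (act n h x)"
proof -
  have "\<forall>n g h x. g \<in> cells G n \<and> h \<in> cells G n \<and> x \<in> cells X n \<longrightarrow>
        act n (g \<otimes>\<^bsub>grp n\<^esub> h) x = act n g (act n h x)"
    using assms(1) unfolding saction_def by (elim conjE) assumption
  with assms show ?thesis by blast
qed
lemma sa_face: assumes "saction G grp X act" "i \<le> Suc p" "g \<in> cells G (Suc p)" "x \<in> cells X (Suc p)"
  shows "face X (Suc p) i (act (Suc p) g x) = act p (face G (Suc p) i g) (face X (Suc p) i x)"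
proof -
  have "\<forall>n i g x. 1 \<le> n \<and> i \<le> n \<and> g \<in> cells G n \<and> x \<in> cells X n \<longrightarrow>
        face X n i (act n g x) = act (n - 1) (face G n i g) (face X n i x)"
    using assms(1) unfolding saction_def by (elim conjE) assumption
  from this[rule_format, of "Suc p" i g x] assms show ?thesis by simp
qed
lemma sa_degen: assumes "saction G grp X act" "i \<le> n" "g \<in> cells G n" "x \<in> cells X n"
  shows "degen X n i (act n g x) = act (Suc n) (degen G n i g) (degen X n i x)"
proof -
  have "\<forall>n i g x. i \<le> n \<and> g \<in> cells G n \<and> x \<in> cells X n \<longrightarrow>
        degen X n i (act n g x) = act (Suc n) (degen G n i g) (degen X n i x)"
    using assms(1) unfolding saction_def by (elim conjE) assumption
  with assms show ?thesis by blast
qed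

lemma sa_inv: assumes "saction G grp X act" "g \<in> cells G n" "x \<in> cells X n"
  shows "act n (inv\<^bsub>grp n\<^esub> g) (act n g x) = x"
proof -
  have gr: "group (grp n)" "carrier (grp n) = cells G n" using sg_group sg_carrier sa_sg assms(1) by blast+
  have ic: "inv\<^bsub>grp n\<^esub> g \<in> cells G n" using group.inv_closed[OF gr(1)] gr(2) assms(2) by auto
  have "act n (inv\<^bsub>grp n\<^esub> g) (act n g x) = act n (inv\<^bsub>grp n\<^esub> g \<otimes>\<^bsub>grp n\<^esub> g) x"
    using sa_mult[OF assms(1) ic assms(2,3)] by simp
  also have "\<dots> = x" using group.l_inv[OF gr(1)] gr(2) assms sa_one by fastforce
  finally show ?thesis .
qed

lemma sa_solve: assumes "saction G grp X act" "g \<in> cells G n" "g' \<in> cells G n" "x \<in> cells X n" "x' \<in> cells X n"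
   "act n g x = act n g' x'"
  shows "x' = act n (inv\<^bsub>grp n\<^esub> g' \<otimes>\<^bsub>grp n\<^esub> g) x"
proof -
  have gr: "group (grp n)" "carrier (grp n) = cells G n" using sg_group sg_carrier sa_sg assms(1) by blast+
  have ic: "inv\<^bsub>grp n\<^esub> g' \<in> cells G n" using group.inv_closed[OF gr(1)] gr(2) assms(3) by auto
  have "act n (inv\<^bsub>grp n\<^esub> g' \<otimes>\<^bsub>grp n\<^esub> g) x = act n (inv\<^bsub>grp n\<^esub> g') (act n g' x')"
    using sa_mult[OF assms(1) ic assms(2,4)] assms(6) by simp
  also have "\<dots> = x'" using sa_inv[OF assms(1,3,5)] .
  finally show ?thesis by simp
qed

section \<open>iterated degeneracies\<close>

lemma di_cells: assumes "sset X" "v \<in> cells X 0" shows "degen_iter X n v \<in> cells X n"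
proof (induction n)
  case 0 then show ?case using assms by simp
next
  case (Suc n) then show ?case using ss_degen_cells[OF assms(1), of 0 n "degen_iter X n v"] by simp
qed

lemma di_face: assumes "sset X" "v \<in> cells X 0"
  shows "i \<le> Suc n \<Longrightarrow> face X (Suc n) i (degen_iter X (Suc n) v) = degen_iter X n v"
proof (induction n arbitrary: i)
  case 0
  have e: "degen_iter X (Suc 0) v = degen X 0 0 v" by simp
  from 0 have "i = 0 \<or> i = Suc 0" by auto
  then show ?case unfolding e using ss_fd_eq[OF assms(1) _ assms(2), of 0] by auto
next
  case (Suc n)
  have c: "degen_iter X (Suc n) v \<in> cells X (Suc n)" using di_cells[OF assms] .
  have e: "degen_iter X (Suc (Suc n)) v = degen X (Suc n) 0 (degen_iter X (Suc n) v)" by simp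
  consider "i = 0" | "i = Suc 0" | "Suc 0 < i" by linarith
  then show ?case
  proof cases
    case 1 then show ?thesis unfolding e using ss_fd_eq(1)[OF assms(1) _ c, of 0] by simp
  next
    case 2 then show ?thesis unfolding e using ss_fd_eq(2)[OF assms(1) _ c, of 0] by simp
  next
    case 3
    have "face X (Suc (Suc n)) i (degen X (Suc n) 0 (degen_iter X (Suc n) v)) =
          degen X n 0 (face X (Suc n) (i - 1) (degen_iter X (Suc n) v))"
      using ss_fd_gt[OF assms(1) _ _ c, of 0 i] 3 Suc.prems by simp
    also have "\<dots> = degen X n 0 (degen_iter X n v)" using Suc.IH[of "i - 1"] Suc.prems by simp
    also have "\<dots> = degen_iter X (Suc n) v" by simp
    finally show ?thesis unfolding e .
  qed
qed

lemma di_degen: assumes "sset X" "v \<in> cells X 0"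
  shows "j \<le> n \<Longrightarrow> degen X n j (degen_iter X n v) = degen_iter X (Suc n) v"
proof (induction n arbitrary: j)
  case 0 then show ?case by simp
next
  case (Suc n)
  show ?case
  proof (cases j)
    case 0 then show ?thesis by simp
  next
    case (Suc j')
    have c: "degen_iter X n v \<in> cells X n" using di_cells[OF assms] .
    have "degen X (Suc n) j (degen_iter X (Suc n) v) = degen X (Suc n) (Suc j') (degen X n 0 (degen_iter X n v))"
      using Suc by simp
    also have "\<dots> = degen X (Suc n) 0 (degen X n j' (degen_iter X n v))"
      using ss_dd[OF assms(1) _ _ c, of 0 j'] Suc.prems Suc by simp
    also have "\<dots> = degen X (Suc n) 0 (degen_iter X (Suc n) v)"
      using Suc.IH[of j'] Suc.prems Suc by simp
    finally show ?thesis by simp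
  qed
qed

lemma di_act: assumes "saction G grp X act" "g \<in> cells G 0" "v \<in> cells X 0"
  shows "degen_iter X n (act 0 g v) = act n (degen_iter G n g) (degen_iter X n v)"
proof (induction n)
  case 0 then show ?case by simp
next
  case (Suc n)
  have "degen_iter X (Suc n) (act 0 g v) = degen X n 0 (act n (degen_iter G n g) (degen_iter X n v))"
    using Suc by simp
  also have "\<dots> = act (Suc n) (degen_iter G (Suc n) g) (degen_iter X (Suc n) v)"
  proof -
    have "degen_iter G n g \<in> cells G n" using di_cells[OF sg_sset[OF sa_sg[OF assms(1)]] assms(2)] .
    moreover have "degen_iter X n v \<in> cells X n" using di_cells[OF sa_sset[OF assms(1)] assms(3)] .
    ultimately show ?thesis using sa_degen[OF assms(1), of 0 n "degen_iter G n g" "degen_iter X n v"] by simp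
  qed
  finally show ?case .
qed

lemma di_smap: assumes "smap X Y f" "sset X" "v \<in> cells X 0"
  shows "f n (degen_iter X n v) = degen_iter Y n (f 0 v)"
proof (induction n)
  case 0 then show ?case by simp
next
  case (Suc n)
  have "\<forall>n i x. i \<le> n \<and> x \<in> cells X n \<longrightarrow> f (Suc n) (degen X n i x) = degen Y n i (f n x)"
    using assms(1) unfolding smap_def by (elim conjE) assumption
  then have "f (Suc n) (degen X n 0 (degen_iter X n v)) = degen Y n 0 (f n (degen_iter X n v))"
    using di_cells[OF assms(2,3)] by blast
  then show ?case using Suc by simp
qed

section \<open>orbits\<close>

lemma orbit_self: "saction G grp X act \<Longrightarrow> x \<in> cells X n \<Longrightarrow> x \<in> orbit G act n x"
proof -
  assume a: "saction G grp X act" "x \<in> cells X n"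
  have "\<one>\<^bsub>grp n\<^esub> \<in> cells G n"
    using sg_carrier[OF sa_sg[OF a(1)], of n] monoid.one_closed[OF group.is_monoid[OF sg_group[OF sa_sg[OF a(1)]]], of n] by simp
  then show ?thesis unfolding orbit_def using sa_one[OF a] by force
qed

lemma orbit_act: assumes "saction G grp X act" "g \<in> cells G n" "x \<in> cells X n"
  shows "orbit G act n (act n g x) = orbit G act n x"
proof -
  have gr: "group (grp n)" "carrier (grp n) = cells G n" using sg_group sg_carrier sa_sg assms(1) by blast+
  show ?thesis unfolding orbit_def
  proof (intro equalityI subsetI)
    fix y assume "y \<in> {act n h (act n g x) |h. h \<in> cells G n}"
    then obtain h where h: "h \<in> cells G n" "y = act n h (act n g x)" by blast
    then have "y = act n (h \<otimes>\<^bsub>grp n\<^esub> g) x" using sa_mult[OF assms(1) h(1) assms(2,3)] by simp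
    moreover have "h \<otimes>\<^bsub>grp n\<^esub> g \<in> cells G n" using monoid.m_closed[OF group.is_monoid[OF gr(1)], of h g] gr(2) h(1) assms(2)
      by simp
    ultimately show "y \<in> {act n h x |h. h \<in> cells G n}" by blast
  next
    fix y assume "y \<in> {act n h x |h. h \<in> cells G n}"
    then obtain h where h: "h \<in> cells G n" "y = act n h x" by blast
    have ic: "inv\<^bsub>grp n\<^esub> g \<in> cells G n" using group.inv_closed[OF gr(1)] gr(2) assms(2) by auto
    have hc: "h \<otimes>\<^bsub>grp n\<^esub> inv\<^bsub>grp n\<^esub> g \<in> cells G n"
      using monoid.m_closed[OF group.is_monoid[OF gr(1)], of h "inv\<^bsub>grp n\<^esub> g"] gr(2) h(1) ic by simp
    have "act n (h \<otimes>\<^bsub>grp n\<^esub> inv\<^bsub>grp n\<^esub> g) (act n g x) = act n h (act n (inv\<^bsub>grp n\<^esub> g) (act n g x))"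
      using sa_mult[OF assms(1) h(1) ic sa_cells[OF assms(1,2,3)]] by simp
    also have "\<dots> = y" using sa_inv[OF assms] h by simp
    finally show "y \<in> {act n h (act n g x) |h. h \<in> cells G n}" using hc by blast
  qed
qed

lemma orbit_mem: assumes "saction G grp X act" "y \<in> orbit G act n x" "x \<in> cells X n"
  shows "orbit G act n y = orbit G act n x"
proof -
  obtain g where "g \<in> cells G n" "y = act n g x" using assms(2) unfolding orbit_def by blast
  then show ?thesis using orbit_act[OF assms(1) _ assms(3)] by simp
qed

lemma orbit_F: assumes "saction G grp X act" "v \<in> cells X 0"
  shows "orbit G act n (degen_iter X n (SOME x. x \<in> orbit G act 0 v)) = orbit G act n (degen_iter X n v)"
proof -
  have "v \<in> orbit G act 0 v" using orbit_self[OF assms] .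
  then have "(SOME x. x \<in> orbit G act 0 v) \<in> orbit G act 0 v" by (rule someI)
  then obtain c where c: "c \<in> cells G 0" "(SOME x. x \<in> orbit G act 0 v) = act 0 c v"
    unfolding orbit_def by blast
  have "degen_iter X n (act 0 c v) = act n (degen_iter G n c) (degen_iter X n v)"
    using di_act[OF assms(1) c(1) assms(2)] .
  moreover have "degen_iter G n c \<in> cells G n" using di_cells[OF sg_sset[OF sa_sg[OF assms(1)]] c(1)] .
  ultimately show ?thesis using c(2) orbit_act[OF assms(1)] di_cells[OF sa_sset[OF assms(1)] assms(2)] by simp
qed

lemma disc_surj: assumes "saction G grp X act" "orbit_space_discrete G X act" "z \<in> cells X n"
  shows "\<exists>v\<in>cells X 0. \<exists>g\<in>cells G n. z = act n g (degen_iter X n v)"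
proof -
  have "bij_betw (\<lambda>Orb. orbit G act n (degen_iter X n (SOME x. x \<in> Orb))) (orbits G X act 0) (orbits G X act n)"
    using assms(2) unfolding orbit_space_discrete_def by blast
  then have "orbit G act n z \<in> (\<lambda>Orb. orbit G act n (degen_iter X n (SOME x. x \<in> Orb))) ` orbits G X act 0"
    using assms(3) unfolding bij_betw_def orbits_def by blast
  then obtain v where v: "v \<in> cells X 0" "orbit G act n z = orbit G act n (degen_iter X n (SOME x. x \<in> orbit G act 0 v))"
    unfolding orbits_def by blast
  then have "z \<in> orbit G act n (degen_iter X n v)"
    using orbit_F[OF assms(1) v(1)] orbit_self[OF assms(1) assms(3)] by simp
  with v(1) show ?thesis unfolding orbit_def by blast
qed

lemma disc_inj: assumes "saction G grp X act" "orbit_space_discrete G X act" "v \<in> cells X 0" "w \<in> cells X 0"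
    "degen_iter X n w \<in> orbit G act n (degen_iter X n v)"
  shows "\<exists>c\<in>cells G 0. w = act 0 c v"
proof -
  have "inj_on (\<lambda>Orb. orbit G act n (degen_iter X n (SOME x. x \<in> Orb))) (orbits G X act 0)"
    using assms(2) unfolding orbit_space_discrete_def bij_betw_def by blast
  moreover have "orbit G act 0 v \<in> orbits G X act 0" "orbit G act 0 w \<in> orbits G X act 0"
    using assms(3,4) unfolding orbits_def by blast+
  moreover have "orbit G act n (degen_iter X n (SOME x. x \<in> orbit G act 0 w)) =
                 orbit G act n (degen_iter X n (SOME x. x \<in> orbit G act 0 v))"
    using orbit_F[OF assms(1)] assms(3,4) orbit_mem[OF assms(1) assms(5)]
      di_cells[OF sa_sset[OF assms(1)] assms(3)] by simp
  ultimately have "orbit G act 0 w = orbit G act 0 v" by (meson inj_onD)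
  then have "w \<in> orbit G act 0 v" using orbit_self[OF assms(1) assms(4)] by simp
  then show ?thesis unfolding orbit_def by blast
qed




definition stab :: "'g sset \<Rightarrow> (nat \<Rightarrow> 'g \<Rightarrow> 'a \<Rightarrow> 'a) \<Rightarrow> 'a sset \<Rightarrow> 'a \<Rightarrow> nat \<Rightarrow> 'g set" where
  "stab G act X v n = {h \<in> cells G n. act n h (degen_iter X n v) = degen_iter X n v}"

lemma stab_ssub: assumes sa: "saction G grp X act" and v: "v \<in> cells X 0"
  shows "ssub G grp (stab G act X v)"
proof -
  have sg: "sgroup G grp" using sa_sg[OF sa] .
  have ss: "sset X" using sa_sset[OF sa] .
  have ssG: "sset G" using sg_sset[OF sg] .
  have sub: "subgroup (stab G act X v n) (grp n)" for n
  proof -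
    have gr: "group (grp n)" "carrier (grp n) = cells G n" using sg_group[OF sg] sg_carrier[OF sg] by blast+
    have dv: "degen_iter X n v \<in> cells X n" using di_cells[OF ss v] .
    show ?thesis
    proof (rule group.subgroupI[OF gr(1)])
      show "stab G act X v n \<subseteq> carrier (grp n)" unfolding stab_def gr(2) by blast
      have "\<one>\<^bsub>grp n\<^esub> \<in> stab G act X v n"
        unfolding stab_def using sa_one[OF sa dv] monoid.one_closed[OF group.is_monoid[OF gr(1)]] gr(2) by simp
      then show "stab G act X v n \<noteq> {}" by blast
    next
      fix x assume x: "x \<in> stab G act X v n"
      then have xc: "x \<in> cells G n" and xe: "act n x (degen_iter X n v) = degen_iter X n v"
        unfolding stab_def by auto
      have ic: "inv\<^bsub>grp n\<^esub> x \<in> cells G n" using group.inv_closed[OF gr(1)] gr(2) xc by auto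
      have "act n (inv\<^bsub>grp n\<^esub> x) (degen_iter X n v) = act n (inv\<^bsub>grp n\<^esub> x) (act n x (degen_iter X n v))"
        using xe by simp
      also have "\<dots> = degen_iter X n v" using sa_inv[OF sa xc dv] .
      finally show "inv\<^bsub>grp n\<^esub> x \<in> stab G act X v n" unfolding stab_def using ic by blast
    next
      fix x y assume x: "x \<in> stab G act X v n" and y: "y \<in> stab G act X v n"
      then have xc: "x \<in> cells G n" and xe: "act n x (degen_iter X n v) = degen_iter X n v"
        and yc: "y \<in> cells G n" and ye: "act n y (degen_iter X n v) = degen_iter X n v"
        unfolding stab_def by auto
      have mc: "x \<otimes>\<^bsub>grp n\<^esub> y \<in> cells G n"
        using monoid.m_closed[OF group.is_monoid[OF gr(1)], of x y] gr(2) xc yc by simp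
      have "act n (x \<otimes>\<^bsub>grp n\<^esub> y) (degen_iter X n v) = degen_iter X n v"
        using sa_mult[OF sa xc yc dv] xe ye by simp
      then show "x \<otimes>\<^bsub>grp n\<^esub> y \<in> stab G act X v n" unfolding stab_def using mc by blast
    qed
  qed
  have fc: "face G (Suc p) i x \<in> stab G act X v p" if "i \<le> Suc p" "x \<in> stab G act X v (Suc p)" for p i x
  proof -
    have xc: "x \<in> cells G (Suc p)" and xe: "act (Suc p) x (degen_iter X (Suc p) v) = degen_iter X (Suc p) v"
      using that unfolding stab_def by auto
    have dv: "degen_iter X (Suc p) v \<in> cells X (Suc p)" using di_cells[OF ss v] .
    have "act p (face G (Suc p) i x) (degen_iter X p v) = act p (face G (Suc p) i x) (face X (Suc p) i (degen_iter X (Suc p) v))"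
      using di_face[OF ss v that(1)] by simp
    also have "\<dots> = face X (Suc p) i (act (Suc p) x (degen_iter X (Suc p) v))"
      using sa_face[OF sa that(1) xc dv] by simp
    also have "\<dots> = degen_iter X p v" using xe di_face[OF ss v that(1)] by simp
    finally show ?thesis unfolding stab_def using ss_face_cells[OF ssG that(1) xc] by blast
  qed
  have dc: "degen G n i x \<in> stab G act X v (Suc n)" if "i \<le> n" "x \<in> stab G act X v n" for n i x
  proof -
    have xc: "x \<in> cells G n" and xe: "act n x (degen_iter X n v) = degen_iter X n v"
      using that unfolding stab_def by auto
    have dv: "degen_iter X n v \<in> cells X n" using di_cells[OF ss v] .
    have "act (Suc n) (degen G n i x) (degen_iter X (Suc n) v) = act (Suc n) (degen G n i x) (degen X n i (degen_iter X n v))"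
      using di_degen[OF ss v that(1)] by simp
    also have "\<dots> = degen X n i (act n x (degen_iter X n v))"
      using sa_degen[OF sa that(1) xc dv] by simp
    also have "\<dots> = degen_iter X (Suc n) v" using xe di_degen[OF ss v that(1)] by simp
    finally show ?thesis unfolding stab_def using ss_degen_cells[OF ssG that(1) xc] by blast
  qed
  show ?thesis unfolding ssub_def using sub fc dc by blast
qed

lemma triv_ssub: assumes sg: "sgroup G grp" shows "ssub G grp (\<lambda>n. {\<one>\<^bsub>grp n\<^esub>})"
  unfolding ssub_def using group.triv_subgroup[OF sg_group[OF sg]] sg_face_one[OF sg] sg_degen_one[OF sg]
  by simp

lemma cells_ssub: assumes sg: "sgroup G grp" shows "ssub G grp (\<lambda>n. cells G n)"
  unfolding ssub_def using group.subgroup_self[OF sg_group[OF sg]] sg_carrier[OF sg]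
    ss_face_cells[OF sg_sset[OF sg]] ss_degen_cells[OF sg_sset[OF sg]]
  by metis




lemma face_rep: assumes sa: "saction G grp X act" and i: "i \<le> Suc p" and b: "b \<in> cells G (Suc p)"
    and u: "u \<in> cells X 0"
  shows "face X (Suc p) i (act (Suc p) b (degen_iter X (Suc p) u)) = act p (face G (Suc p) i b) (degen_iter X p u)"
  using sa_face[OF sa i b di_cells[OF sa_sset[OF sa] u]] di_face[OF sa_sset[OF sa] u i] by simp

lemma horn_rep:
  assumes sa: "saction G grp X act" and disc: "orbit_space_discrete G X act"
    and k: "k \<le> Suc m" and xs: "\<forall>i\<le>Suc m. i \<noteq> k \<longrightarrow> xs i \<in> cells X m"
    and cp: "\<forall>i j. i < j \<and> j \<le> Suc m \<and> i \<noteq> k \<and> j \<noteq> k \<longrightarrow> face X m i (xs j) = face X m (j - 1) (xs i)"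
  shows "\<exists>v\<in>cells X 0. \<exists>a. \<forall>i\<le>Suc m. i \<noteq> k \<longrightarrow> a i \<in> cells G m \<and> xs i = act m (a i) (degen_iter X m v)"
proof -
  have sg: "sgroup G grp" using sa_sg[OF sa] .
  have ss: "sset X" using sa_sset[OF sa] .
  define j0 where "j0 = (if k = 0 then 1 else (0::nat))"
  have j0: "j0 \<le> Suc m" "j0 \<noteq> k" unfolding j0_def by auto
  obtain v b0 where v: "v \<in> cells X 0" "b0 \<in> cells G m" "xs j0 = act m b0 (degen_iter X m v)"
    using disc_surj[OF sa disc, of "xs j0" m] xs j0 by blast
  have "\<exists>a. a \<in> cells G m \<and> xs i = act m a (degen_iter X m v)" if i: "i \<le> Suc m" "i \<noteq> k" for i
  proof (cases "i = j0")
    case True then show ?thesis using v by blast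
  next
    case False
    obtain u b where u: "u \<in> cells X 0" "b \<in> cells G m" "xs i = act m b (degen_iter X m u)"
      using disc_surj[OF sa disc, of "xs i" m] xs i by blast
    have "\<exists>i' j'. i' \<le> m \<and> j' \<le> m \<and> face X m i' (xs i) = face X m j' (xs j0)"
    proof (cases "i < j0")
      case True
      then show ?thesis using cp[rule_format, of i j0] i j0 by (intro exI[of _ "j0 - 1"] exI[of _ i]) auto
    next
      case False
      then have "j0 < i" using \<open>i \<noteq> j0\<close> by simp
      then show ?thesis using cp[rule_format, of j0 i] i j0 by (intro exI[of _ j0] exI[of _ "i - 1"]) auto
    qed
    then obtain i' j' where ij: "i' \<le> m" "j' \<le> m" "face X m i' (xs i) = face X m j' (xs j0)" by blast
    have "m \<noteq> 0" using i j0 k \<open>i \<noteq> j0\<close> unfolding j0_def by (cases "k = 0") auto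
    then obtain p where mp: "m = Suc p" by (cases m) auto
    have e1: "face X m i' (xs i) = act p (face G m i' b) (degen_iter X p u)"
      using face_rep[OF sa _ _ u(1), of i' p b] u ij mp by simp
    have e2: "face X m j' (xs j0) = act p (face G m j' b0) (degen_iter X p v)"
      using face_rep[OF sa _ _ v(1), of j' p b0] v ij mp by simp
    have fb: "face G m i' b \<in> cells G p" using ss_face_cells[OF sg_sset[OF sg], of i' p b] ij u mp by simp
    have fb0: "face G m j' b0 \<in> cells G p" using ss_face_cells[OF sg_sset[OF sg], of j' p b0] ij v mp by simp
    have gr: "group (grp p)" "carrier (grp p) = cells G p" using sg_group[OF sg] sg_carrier[OF sg] by blast+
    have "degen_iter X p u = act p (inv\<^bsub>grp p\<^esub> (face G m i' b) \<otimes>\<^bsub>grp p\<^esub> face G m j' b0) (degen_iter X p v)"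
      using sa_solve[OF sa fb0 fb di_cells[OF ss v(1)] di_cells[OF ss u(1)]] e1 e2 ij by simp
    moreover have "inv\<^bsub>grp p\<^esub> (face G m i' b) \<otimes>\<^bsub>grp p\<^esub> face G m j' b0 \<in> cells G p"
      using monoid.m_closed[OF group.is_monoid[OF gr(1)]] group.inv_closed[OF gr(1)] gr(2) fb fb0 by simp
    ultimately have "degen_iter X p u \<in> orbit G act p (degen_iter X p v)" unfolding orbit_def by blast
    then obtain c where c: "c \<in> cells G 0" "u = act 0 c v" using disc_inj[OF sa disc v(1) u(1)] by blast
    have dc: "degen_iter G m c \<in> cells G m" using di_cells[OF sg_sset[OF sg] c(1)] .
    have grm: "group (grp m)" "carrier (grp m) = cells G m" using sg_group[OF sg] sg_carrier[OF sg] by blast+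
    have "xs i = act m (b \<otimes>\<^bsub>grp m\<^esub> degen_iter G m c) (degen_iter X m v)"
      using u(3) c(2) di_act[OF sa c(1) v(1)] sa_mult[OF sa u(2) dc di_cells[OF ss v(1)]] by simp
    moreover have "b \<otimes>\<^bsub>grp m\<^esub> degen_iter G m c \<in> cells G m"
      using monoid.m_closed[OF group.is_monoid[OF grm(1)]] grm(2) u(2) dc by simp
    ultimately show ?thesis by blast
  qed
  then have "\<forall>i. \<exists>a. i \<le> Suc m \<and> i \<noteq> k \<longrightarrow> a \<in> cells G m \<and> xs i = act m a (degen_iter X m v)" by blast
  then obtain a where "\<forall>i. i \<le> Suc m \<and> i \<noteq> k \<longrightarrow> a i \<in> cells G m \<and> xs i = act m (a i) (degen_iter X m v)"
    by metis
  then show ?thesis using v(1) by blast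
qed

lemma horn_lift:
  assumes sa: "saction G grp X act" and k: "k \<le> Suc m" and v: "v \<in> cells X 0"
    and a: "\<forall>i\<le>Suc m. i \<noteq> k \<longrightarrow> a i \<in> cells G m \<and> xs i = act m (a i) (degen_iter X m v)"
    and cp: "\<forall>i j. i < j \<and> j \<le> Suc m \<and> i \<noteq> k \<and> j \<noteq> k \<longrightarrow> face X m i (xs j) = face X m (j - 1) (xs i)"
  shows "\<exists>W\<in>cells G (Suc m). \<forall>i\<le>Suc m. i \<noteq> k \<longrightarrow> act m (face G (Suc m) i W) (degen_iter X m v) = xs i"
proof -
  have sg: "sgroup G grp" using sa_sg[OF sa] .
  have ss: "sset X" using sa_sset[OF sa] .
  have HK: "stab G act X v n \<subseteq> cells G n" for n unfolding stab_def by blast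
  have compat: "\<exists>h\<in>stab G act X v (m - 1). face G m (j - 1) (a i) = face G m i (a j) \<otimes>\<^bsub>grp (m - 1)\<^esub> h"
    if ij: "i < j" "j \<le> Suc m" "i \<noteq> k" "j \<noteq> k" for i j
  proof -
    have "m \<noteq> 0" using ij k by auto
    then obtain p where mp: "m = Suc p" by (cases m) auto
    have ai: "a i \<in> cells G (Suc p)" "xs i = act (Suc p) (a i) (degen_iter X (Suc p) v)" using a ij mp by auto
    have aj: "a j \<in> cells G (Suc p)" "xs j = act (Suc p) (a j) (degen_iter X (Suc p) v)" using a ij mp by auto
    define c1 where "c1 = face G (Suc p) i (a j)"
    define c2 where "c2 = face G (Suc p) (j - 1) (a i)"
    have c1: "c1 \<in> cells G p" unfolding c1_def using ss_face_cells[OF sg_sset[OF sg] _ aj(1), of i] ij mp by simp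
    have c2: "c2 \<in> cells G p" unfolding c2_def using ss_face_cells[OF sg_sset[OF sg] _ ai(1), of "j - 1"] ij mp by simp
    have gr: "group (grp p)" "carrier (grp p) = cells G p" using sg_group[OF sg] sg_carrier[OF sg] by blast+
    define h where "h = inv\<^bsub>grp p\<^esub> c1 \<otimes>\<^bsub>grp p\<^esub> c2"
    have ic1: "inv\<^bsub>grp p\<^esub> c1 \<in> cells G p" using group.inv_closed[OF gr(1)] gr(2) c1 by auto
    have hc: "h \<in> cells G p" unfolding h_def using monoid.m_closed[OF group.is_monoid[OF gr(1)]] gr(2) ic1 c2 by simp
    have eq: "c2 = c1 \<otimes>\<^bsub>grp p\<^esub> h" unfolding h_def using group.cancel_l1[OF gr(1)] gr(2) c1 c2 by simp
    have dv: "degen_iter X p v \<in> cells X p" using di_cells[OF ss v] .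
    have "act p c2 (degen_iter X p v) = face X (Suc p) (j - 1) (xs i)"
      unfolding c2_def using face_rep[OF sa _ ai(1) v, of "j - 1"] ai(2) ij mp by simp
    also have "\<dots> = face X (Suc p) i (xs j)" using cp ij mp by simp
    also have "\<dots> = act p c1 (degen_iter X p v)"
      unfolding c1_def using face_rep[OF sa _ aj(1) v, of i] aj(2) ij mp by simp
    finally have e: "act p c2 (degen_iter X p v) = act p c1 (degen_iter X p v)" .
    have "act p h (degen_iter X p v) = act p (inv\<^bsub>grp p\<^esub> c1) (act p c2 (degen_iter X p v))"
      unfolding h_def using sa_mult[OF sa ic1 c2 dv] .
    also have "\<dots> = degen_iter X p v" unfolding e using sa_inv[OF sa c1 dv] .
    finally have "h \<in> stab G act X v p" unfolding stab_def using hc by blast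
    then show ?thesis using eq mp unfolding c1_def c2_def by auto
  qed
  obtain W where W: "W \<in> cells G (Suc m)"
    "\<forall>i\<le>Suc m. i \<noteq> k \<longrightarrow> (\<exists>h\<in>stab G act X v m. face G (Suc m) i W = a i \<otimes>\<^bsub>grp m\<^esub> h)"
    using moore_fill[OF sg cells_ssub[OF sg] stab_ssub[OF sa v] HK k, of a] a compat by blast
  have "act m (face G (Suc m) i W) (degen_iter X m v) = xs i" if i: "i \<le> Suc m" "i \<noteq> k" for i
  proof -
    obtain h where h: "h \<in> stab G act X v m" "face G (Suc m) i W = a i \<otimes>\<^bsub>grp m\<^esub> h" using W(2) i by blast
    have hc: "h \<in> cells G m" and he: "act m h (degen_iter X m v) = degen_iter X m v"
      using h(1) unfolding stab_def by auto
    have "act m (a i \<otimes>\<^bsub>grp m\<^esub> h) (degen_iter X m v) = act m (a i) (act m h (degen_iter X m v))"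
      using sa_mult[OF sa _ hc di_cells[OF ss v], of "a i"] a i by simp
    then show ?thesis using h(2) he a i by simp
  qed
  with W(1) show ?thesis by blast
qed




lemma main_step:
  fixes G :: "'g sset" and grp :: "nat \<Rightarrow> 'g monoid"
    and X :: "'a sset" and act :: "nat \<Rightarrow> 'g \<Rightarrow> 'a \<Rightarrow> 'a"
    and G' :: "'h sset" and grp' :: "nat \<Rightarrow> 'h monoid"
    and X' :: "'b sset" and act' :: "nat \<Rightarrow> 'h \<Rightarrow> 'b \<Rightarrow> 'b"
    and \<phi> :: "nat \<Rightarrow> 'g \<Rightarrow> 'h" and f :: "nat \<Rightarrow> 'a \<Rightarrow> 'b"
  assumes sa: "saction G grp X act"
    and sa': "saction G' grp' X' act'"
    and disc: "orbit_space_discrete G X act"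
    and disc': "orbit_space_discrete G' X' act'"
    and hom: "sgroup_hom G grp G' grp' \<phi>"
    and fm: "smap X X' f"
    and eqv: "\<forall>n g x. g \<in> cells G n \<and> x \<in> cells X n \<longrightarrow> f n (act n g x) = act' n (\<phi> n g) (f n x)"
    and kan: "kan_fibration G G' \<phi>"
    and k: "k \<le> Suc m" and xs: "\<forall>i\<le>Suc m. i \<noteq> k \<longrightarrow> xs i \<in> cells X m"
    and cp: "\<forall>i j. i < j \<and> j \<le> Suc m \<and> i \<noteq> k \<and> j \<noteq> k \<longrightarrow> face X m i (xs j) = face X m (j - 1) (xs i)"
    and y: "y \<in> cells X' (Suc m)"
    and yf: "\<forall>i\<le>Suc m. i \<noteq> k \<longrightarrow> face X' (Suc m) i y = f m (xs i)"
  shows "\<exists>x\<in>cells X (Suc m). f (Suc m) x = y \<and> (\<forall>i\<le>Suc m. i \<noteq> k \<longrightarrow> face X (Suc m) i x = xs i)"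
proof -
  have sg: "sgroup G grp" using sa_sg[OF sa] .
  have sg': "sgroup G' grp'" using sa_sg[OF sa'] .
  have ss: "sset X" using sa_sset[OF sa] .
  have ss': "sset X'" using sa_sset[OF sa'] .
  have sG: "sset G" using sg_sset[OF sg] .
  have sG': "sset G'" using sg_sset[OF sg'] .
  have phis: "smap G G' \<phi>" using hom unfolding sgroup_hom_def by blast
  have phi_cells: "\<phi> n g \<in> cells G' n" if "g \<in> cells G n" for n g
  proof -
    have "\<forall>n x. x \<in> cells G n \<longrightarrow> \<phi> n x \<in> cells G' n"
      using phis unfolding smap_def by (elim conjE) assumption
    with that show ?thesis by blast
  qed
  have phi_face: "\<phi> p (face G (Suc p) i g) = face G' (Suc p) i (\<phi> (Suc p) g)"
    if "i \<le> Suc p" "g \<in> cells G (Suc p)" for p i g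
  proof -
    have "\<forall>n i x. 1 \<le> n \<and> i \<le> n \<and> x \<in> cells G n \<longrightarrow> \<phi> (n - 1) (face G n i x) = face G' n i (\<phi> n x)"
      using phis unfolding smap_def by (elim conjE) assumption
    from this[rule_format, of "Suc p" i g] that show ?thesis by simp
  qed
  have f_cells: "f n x \<in> cells X' n" if "x \<in> cells X n" for n x
  proof -
    have "\<forall>n x. x \<in> cells X n \<longrightarrow> f n x \<in> cells X' n"
      using fm unfolding smap_def by (elim conjE) assumption
    with that show ?thesis by blast
  qed
  have f_face: "f p (face X (Suc p) i x) = face X' (Suc p) i (f (Suc p) x)"
    if "i \<le> Suc p" "x \<in> cells X (Suc p)" for p i x
  proof -
    have "\<forall>n i x. 1 \<le> n \<and> i \<le> n \<and> x \<in> cells X n \<longrightarrow> f (n - 1) (face X n i x) = face X' n i (f n x)"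
      using fm unfolding smap_def by (elim conjE) assumption
    from this[rule_format, of "Suc p" i x] that show ?thesis by simp
  qed
  have grm: "group (grp' n)" "carrier (grp' n) = cells G' n" for n
    using sg_group[OF sg'] sg_carrier[OF sg'] by blast+
  \<comment> \<open>Step 1: lift the horn to G\<close>
  obtain v a where v: "v \<in> cells X 0"
    and a: "\<forall>i\<le>Suc m. i \<noteq> k \<longrightarrow> a i \<in> cells G m \<and> xs i = act m (a i) (degen_iter X m v)"
    using horn_rep[OF sa disc k xs cp] by blast
  obtain W where W: "W \<in> cells G (Suc m)"
    "\<forall>i\<le>Suc m. i \<noteq> k \<longrightarrow> act m (face G (Suc m) i W) (degen_iter X m v) = xs i"
    using horn_lift[OF sa k v a cp] by blast
  define w where "w = f 0 v"
  have w: "w \<in> cells X' 0" unfolding w_def using f_cells[OF v] .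
  define P where "P = \<phi> (Suc m) W"
  have P: "P \<in> cells G' (Suc m)" unfolding P_def using phi_cells[OF W(1)] .
  have K1: "f m (xs i) = act' m (face G' (Suc m) i P) (degen_iter X' m w)" if i: "i \<le> Suc m" "i \<noteq> k" for i
  proof -
    have fW: "face G (Suc m) i W \<in> cells G m" using ss_face_cells[OF sG i(1) W(1)] .
    have "f m (xs i) = f m (act m (face G (Suc m) i W) (degen_iter X m v))" using W(2) i by simp
    also have "\<dots> = act' m (\<phi> m (face G (Suc m) i W)) (f m (degen_iter X m v))"
      using eqv fW di_cells[OF ss v] by blast
    also have "\<dots> = act' m (face G' (Suc m) i P) (degen_iter X' m w)"
      unfolding P_def w_def using phi_face[OF i(1) W(1)] di_smap[OF fm ss v] by simp
    finally show ?thesis .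
  qed
  define j0 where "j0 = (if k = 0 then 1 else (0::nat))"
  have j0: "j0 \<le> Suc m" "j0 \<noteq> k" unfolding j0_def by auto
  obtain u b where u: "u \<in> cells X' 0" "b \<in> cells G' (Suc m)" "y = act' (Suc m) b (degen_iter X' (Suc m) u)"
    using disc_surj[OF sa' disc' y] by blast
  have "act' m (face G' (Suc m) j0 b) (degen_iter X' m u) = face X' (Suc m) j0 y"
    using face_rep[OF sa' j0(1) u(2) u(1)] u(3) by simp
  also have "\<dots> = act' m (face G' (Suc m) j0 P) (degen_iter X' m w)" using yf K1 j0 by simp
  finally have e: "act' m (face G' (Suc m) j0 P) (degen_iter X' m w) = act' m (face G' (Suc m) j0 b) (degen_iter X' m u)" by simp
  have fb: "face G' (Suc m) j0 b \<in> cells G' m" using ss_face_cells[OF sG' j0(1) u(2)] .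
  have fP: "face G' (Suc m) j0 P \<in> cells G' m" using ss_face_cells[OF sG' j0(1) P] .
  have "degen_iter X' m u = act' m (inv\<^bsub>grp' m\<^esub> (face G' (Suc m) j0 b) \<otimes>\<^bsub>grp' m\<^esub> face G' (Suc m) j0 P) (degen_iter X' m w)"
    using sa_solve[OF sa' fP fb di_cells[OF ss' w] di_cells[OF ss' u(1)] e] .
  moreover have "inv\<^bsub>grp' m\<^esub> (face G' (Suc m) j0 b) \<otimes>\<^bsub>grp' m\<^esub> face G' (Suc m) j0 P \<in> cells G' m"
    using monoid.m_closed[OF group.is_monoid[OF grm(1)]] group.inv_closed[OF grm(1)] grm(2) fb fP by simp
  ultimately have "degen_iter X' m u \<in> orbit G' act' m (degen_iter X' m w)" unfolding orbit_def by blast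
  then obtain c where c: "c \<in> cells G' 0" "u = act' 0 c w" using disc_inj[OF sa' disc' w u(1)] by blast
  define g' where "g' = b \<otimes>\<^bsub>grp' (Suc m)\<^esub> degen_iter G' (Suc m) c"
  have dc: "degen_iter G' (Suc m) c \<in> cells G' (Suc m)" using di_cells[OF sG' c(1)] .
  have g': "g' \<in> cells G' (Suc m)" unfolding g'_def
    using monoid.m_closed[OF group.is_monoid[OF grm(1)]] grm(2) u(2) dc by simp
  have yg: "y = act' (Suc m) g' (degen_iter X' (Suc m) w)"
    unfolding g'_def using u(3) c(2) di_act[OF sa' c(1) w, of "Suc m"] sa_mult[OF sa' u(2) dc di_cells[OF ss' w]] by (simp del: degen_iter.simps)
  \<comment> \<open>Step 3: correct g' by a stabiliser element\<close>
  define a' where "a' i = inv\<^bsub>grp' m\<^esub> (face G' (Suc m) i P) \<otimes>\<^bsub>grp' m\<^esub> face G' (Suc m) i g'" for i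
  have a'c: "a' i \<in> cells G' m" if "i \<le> Suc m" for i
    unfolding a'_def using monoid.m_closed[OF group.is_monoid[OF grm(1)]] group.inv_closed[OF grm(1)] grm(2)
      ss_face_cells[OF sG' that P] ss_face_cells[OF sG' that g'] by simp
  have a'S: "a' i \<in> stab G' act' X' w m" if i: "i \<le> Suc m" "i \<noteq> k" for i
  proof -
    have fP: "face G' (Suc m) i P \<in> cells G' m" using ss_face_cells[OF sG' i(1) P] .
    have fg: "face G' (Suc m) i g' \<in> cells G' m" using ss_face_cells[OF sG' i(1) g'] .
    have ifP: "inv\<^bsub>grp' m\<^esub> (face G' (Suc m) i P) \<in> cells G' m" using group.inv_closed[OF grm(1)] grm(2) fP by auto
    have "act' m (face G' (Suc m) i g') (degen_iter X' m w) = face X' (Suc m) i y"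
      using face_rep[OF sa' i(1) g' w] yg by simp
    also have "\<dots> = act' m (face G' (Suc m) i P) (degen_iter X' m w)" using yf K1 i by simp
    finally have e: "act' m (face G' (Suc m) i g') (degen_iter X' m w) = act' m (face G' (Suc m) i P) (degen_iter X' m w)" .
    have "act' m (a' i) (degen_iter X' m w) = act' m (inv\<^bsub>grp' m\<^esub> (face G' (Suc m) i P)) (act' m (face G' (Suc m) i g') (degen_iter X' m w))"
      unfolding a'_def using sa_mult[OF sa' ifP fg di_cells[OF ss' w]] .
    also have "\<dots> = degen_iter X' m w" unfolding e using sa_inv[OF sa' fP di_cells[OF ss' w]] .
    finally show ?thesis unfolding stab_def using a'c i by blast
  qed
  have HK: "{\<one>\<^bsub>grp' n\<^esub>} \<subseteq> stab G' act' X' w n" for n using ssub_one[OF stab_ssub[OF sa' w]] by blast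
  have compat: "\<exists>h\<in>{\<one>\<^bsub>grp' (m - 1)\<^esub>}. face G' m (j - 1) (a' i) = face G' m i (a' j) \<otimes>\<^bsub>grp' (m - 1)\<^esub> h"
    if ij: "i < j" "j \<le> Suc m" "i \<noteq> k" "j \<noteq> k" for i j
  proof -
    have "m \<noteq> 0" using ij k by auto
    then obtain p where mp: "m = Suc p" by (cases m) auto
    have Pc: "P \<in> cells G' (Suc (Suc p))" and gc: "g' \<in> cells G' (Suc (Suc p))" using P g' mp by auto
    have il: "i \<le> Suc p" "j - 1 \<le> Suc p" "i \<le> Suc (Suc p)" "j \<le> Suc (Suc p)" using ij mp by auto
    have fiP: "face G' (Suc (Suc p)) i P \<in> cells G' (Suc p)" using ss_face_cells[OF sG' il(3) Pc] .
    have fig: "face G' (Suc (Suc p)) i g' \<in> cells G' (Suc p)" using ss_face_cells[OF sG' il(3) gc] .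
    have fjP: "face G' (Suc (Suc p)) j P \<in> cells G' (Suc p)" using ss_face_cells[OF sG' il(4) Pc] .
    have fjg: "face G' (Suc (Suc p)) j g' \<in> cells G' (Suc p)" using ss_face_cells[OF sG' il(4) gc] .
    have ifiP: "inv\<^bsub>grp' (Suc p)\<^esub> face G' (Suc (Suc p)) i P \<in> cells G' (Suc p)"
      using group.inv_closed[OF grm(1)] grm(2) fiP by auto
    have ifjP: "inv\<^bsub>grp' (Suc p)\<^esub> face G' (Suc (Suc p)) j P \<in> cells G' (Suc p)"
      using group.inv_closed[OF grm(1)] grm(2) fjP by auto
    have "face G' (Suc p) (j - 1) (a' i) = inv\<^bsub>grp' p\<^esub> (face G' (Suc p) (j - 1) (face G' (Suc (Suc p)) i P)) \<otimes>\<^bsub>grp' p\<^esub> face G' (Suc p) (j - 1) (face G' (Suc (Suc p)) i g')"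
      unfolding a'_def mp using sg_face_mult[OF sg' il(2) ifiP fig] sg_face_inv[OF sg' il(2) fiP] by simp
    also have "\<dots> = inv\<^bsub>grp' p\<^esub> (face G' (Suc p) i (face G' (Suc (Suc p)) j P)) \<otimes>\<^bsub>grp' p\<^esub> face G' (Suc p) i (face G' (Suc (Suc p)) j g')"
      using ss_ff[OF sG' ij(1) il(4) Pc] ss_ff[OF sG' ij(1) il(4) gc] by simp
    also have "\<dots> = face G' (Suc p) i (a' j)"
      unfolding a'_def mp using sg_face_mult[OF sg' il(1) ifjP fjg] sg_face_inv[OF sg' il(1) fjP] by simp
    finally have e: "face G' (Suc p) (j - 1) (a' i) = face G' (Suc p) i (a' j)" .
    have "face G' (Suc p) i (a' j) \<in> cells G' p" using ss_face_cells[OF sG' il(1), of "a' j"] a'c[OF ij(2)] mp by simp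
    then have "face G' (Suc p) i (a' j) \<otimes>\<^bsub>grp' p\<^esub> \<one>\<^bsub>grp' p\<^esub> = face G' (Suc p) i (a' j)"
      using monoid.r_one[OF group.is_monoid[OF grm(1)]] grm(2) by simp
    then show ?thesis using e mp by simp
  qed
  obtain h' where h': "h' \<in> stab G' act' X' w (Suc m)"
    "\<forall>i\<le>Suc m. i \<noteq> k \<longrightarrow> (\<exists>h\<in>{\<one>\<^bsub>grp' m\<^esub>}. face G' (Suc m) i h' = a' i \<otimes>\<^bsub>grp' m\<^esub> h)"
    using moore_fill[OF sg' stab_ssub[OF sa' w] triv_ssub[OF sg'] HK k, of a'] a'S compat by blast
  have h'c: "h' \<in> cells G' (Suc m)" using h'(1) unfolding stab_def by blast
  have ih': "inv\<^bsub>grp' (Suc m)\<^esub> h' \<in> stab G' act' X' w (Suc m)" using ssub_inv[OF sg' stab_ssub[OF sa' w] h'(1)] .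
  have ih'c: "inv\<^bsub>grp' (Suc m)\<^esub> h' \<in> cells G' (Suc m)" using ih' unfolding stab_def by blast
  define g'' where "g'' = g' \<otimes>\<^bsub>grp' (Suc m)\<^esub> inv\<^bsub>grp' (Suc m)\<^esub> h'"
  have g'': "g'' \<in> cells G' (Suc m)" unfolding g''_def
    using monoid.m_closed[OF group.is_monoid[OF grm(1)]] grm(2) g' ih'c by simp
  have yg'': "act' (Suc m) g'' (degen_iter X' (Suc m) w) = y"
  proof -
    have "act' (Suc m) (inv\<^bsub>grp' (Suc m)\<^esub> h') (degen_iter X' (Suc m) w) = degen_iter X' (Suc m) w"
      using ih' unfolding stab_def by blast
    then show ?thesis unfolding g''_def using sa_mult[OF sa' g' ih'c di_cells[OF ss' w]] yg by simp
  qed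
  have fg'': "face G' (Suc m) i g'' = \<phi> m (face G (Suc m) i W)" if i: "i \<le> Suc m" "i \<noteq> k" for i
  proof -
    have fa: "face G' (Suc m) i h' = a' i" using h'(2) i a'c[OF i(1)] monoid.r_one[OF group.is_monoid[OF grm(1)]] grm(2)
      by force
    have fP: "face G' (Suc m) i P \<in> cells G' m" using ss_face_cells[OF sG' i(1) P] .
    have fg: "face G' (Suc m) i g' \<in> cells G' m" using ss_face_cells[OF sG' i(1) g'] .
    have ifP: "inv\<^bsub>grp' m\<^esub> (face G' (Suc m) i P) \<in> cells G' m" using group.inv_closed[OF grm(1)] grm(2) fP by auto
    have "face G' (Suc m) i g'' = face G' (Suc m) i g' \<otimes>\<^bsub>grp' m\<^esub> inv\<^bsub>grp' m\<^esub> (a' i)"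
      unfolding g''_def using sg_face_mult[OF sg' i(1) g' ih'c] sg_face_inv[OF sg' i(1) h'c] fa by simp
    also have "\<dots> = face G' (Suc m) i g' \<otimes>\<^bsub>grp' m\<^esub> (inv\<^bsub>grp' m\<^esub> (face G' (Suc m) i g') \<otimes>\<^bsub>grp' m\<^esub> face G' (Suc m) i P)"
      unfolding a'_def using group.inv_mult_group[OF grm(1)] group.inv_inv[OF grm(1)] grm(2) ifP fg fP by simp
    also have "\<dots> = face G' (Suc m) i P" using group.cancel_l1[OF grm(1)] grm(2) fg fP by simp
    finally show ?thesis unfolding P_def using phi_face[OF i(1) W(1)] by simp
  qed
  have kanD: "\<forall>n k xs y. 1 \<le> n \<and> k \<le> n \<and>
        (\<forall>i\<le>n. i \<noteq> k \<longrightarrow> xs i \<in> cells G (n - 1)) \<and>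
        (\<forall>i j. i < j \<and> j \<le> n \<and> i \<noteq> k \<and> j \<noteq> k \<longrightarrow>
            face G (n - 1) i (xs j) = face G (n - 1) (j - 1) (xs i)) \<and>
        y \<in> cells G' n \<and>
        (\<forall>i\<le>n. i \<noteq> k \<longrightarrow> face G' n i y = \<phi> (n - 1) (xs i))
      \<longrightarrow> (\<exists>x \<in> cells G n. \<phi> n x = y \<and> (\<forall>i\<le>n. i \<noteq> k \<longrightarrow> face G n i x = xs i))"
    using kan unfolding kan_fibration_def by (elim conjE) assumption
  have hcp: "face G m i (face G (Suc m) j W) = face G m (j - 1) (face G (Suc m) i W)"
    if ij: "i < j" "j \<le> Suc m" "i \<noteq> k" "j \<noteq> k" for i j
  proof -
    have "m \<noteq> 0" using ij k by auto
    then obtain p where mp: "m = Suc p" by (cases m) auto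
    show ?thesis using ss_ff[OF sG ij(1), of p W] ij W(1) mp by simp
  qed
  obtain g where g: "g \<in> cells G (Suc m)" "\<phi> (Suc m) g = g''"
    "\<forall>i\<le>Suc m. i \<noteq> k \<longrightarrow> face G (Suc m) i g = face G (Suc m) i W"
    using kanD[rule_format, of "Suc m" k "\<lambda>i. face G (Suc m) i W" g''] k ss_face_cells[OF sG _ W(1)]
      hcp g'' fg'' by auto
  define x where "x = act (Suc m) g (degen_iter X (Suc m) v)"
  have x: "x \<in> cells X (Suc m)" unfolding x_def using sa_cells[OF sa g(1) di_cells[OF ss v]] .
  have "f (Suc m) x = act' (Suc m) g'' (degen_iter X' (Suc m) w)"
  proof -
    have "f (Suc m) x = act' (Suc m) (\<phi> (Suc m) g) (f (Suc m) (degen_iter X (Suc m) v))"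
      unfolding x_def using eqv g(1) di_cells[OF ss v, of "Suc m"] by blast
    then show ?thesis unfolding w_def using g(2) di_smap[OF fm ss v, of "Suc m"] by (simp del: degen_iter.simps)
  qed
  then have fx: "f (Suc m) x = y" using yg'' by simp
  have "face X (Suc m) i x = xs i" if i: "i \<le> Suc m" "i \<noteq> k" for i
    unfolding x_def using face_rep[OF sa i(1) g(1) v] g(3) W(2) i by simp
  with x fx show ?thesis by blast
qed


theorem proposition4p4:
  fixes G :: "'g sset" and grp :: "nat \<Rightarrow> 'g monoid"
    and X :: "'a sset" and act :: "nat \<Rightarrow> 'g \<Rightarrow> 'a \<Rightarrow> 'a"
    and G' :: "'h sset" and grp' :: "nat \<Rightarrow> 'h monoid"
    and X' :: "'b sset" and act' :: "nat \<Rightarrow> 'h \<Rightarrow> 'b \<Rightarrow> 'b"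
    and \<phi> :: "nat \<Rightarrow> 'g \<Rightarrow> 'h" and f :: "nat \<Rightarrow> 'a \<Rightarrow> 'b"
  assumes "saction G grp X act"
    and "saction G' grp' X' act'"
    and "orbit_space_discrete G X act"
    and "orbit_space_discrete G' X' act'"
    and "sgroup_hom G grp G' grp' \<phi>"
    and "smap X X' f"
    and "\<forall>n g x. g \<in> cells G n \<and> x \<in> cells X n \<longrightarrow> f n (act n g x) = act' n (\<phi> n g) (f n x)"
    and "kan_fibration G G' \<phi>"
  shows "kan_fibration X X' f"
  unfolding kan_fibration_def
proof (intro conjI allI impI)
  show "smap X X' f" by fact
next
  fix n k xs y
  assume H: "1 \<le> n \<and> k \<le> n \<and>
        (\<forall>i\<le>n. i \<noteq> k \<longrightarrow> xs i \<in> cells X (n - 1)) \<and>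
        (\<forall>i j. i < j \<and> j \<le> n \<and> i \<noteq> k \<and> j \<noteq> k \<longrightarrow>
            face X (n - 1) i (xs j) = face X (n - 1) (j - 1) (xs i)) \<and>
        y \<in> cells X' n \<and>
        (\<forall>i\<le>n. i \<noteq> k \<longrightarrow> face X' n i y = f (n - 1) (xs i))"
  then obtain m where n: "n = Suc m" by (cases n) auto
  have H': "k \<le> Suc m" "\<forall>i\<le>Suc m. i \<noteq> k \<longrightarrow> xs i \<in> cells X m"
    "\<forall>i j. i < j \<and> j \<le> Suc m \<and> i \<noteq> k \<and> j \<noteq> k \<longrightarrow> face X m i (xs j) = face X m (j - 1) (xs i)"
    "y \<in> cells X' (Suc m)" "\<forall>i\<le>Suc m. i \<noteq> k \<longrightarrow> face X' (Suc m) i y = f m (xs i)"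
    using H unfolding n by simp_all
  show "\<exists>x\<in>cells X n. f n x = y \<and> (\<forall>i\<le>n. i \<noteq> k \<longrightarrow> face X n i x = xs i)"
    unfolding n using main_step[OF assms H'] .
qed

end
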